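(* Let $\mathfrak g=\mathfrak{sl}_4(\mathbb C)$ with simple roots $\alpha_1,\alpha_2,\alpha_3$. Let $e=X_{\alpha_1}+X_{\alpha_2+\alpha_3}$, which generates the nilpotent orbit with partition $(3,1)$, and let $h^+=2H_{\alpha_1}+2H_{\alpha_2}+2H_{\alpha_3}$ be the neutral element of its standard $\mathfrak{sl}_2$-triple. Let $\mathfrak n$ be the span of $$H_{\alpha_1},\ H_{\alpha_2+\alpha_3},\ X_{\alpha_1},\ X_{\alpha_2},\ X_{-\alpha_2},\ X_{-\alpha_1},\ X_{-\alpha_3},\ X_{-\alpha_1-\alpha_2},\ X_{-\alpha_2-\alpha_3},\ X_{-\alpha_1-\alpha_2-\alpha_3}.$$ Let $\mathfrak n'$ be the span of the same vectors, except that $H_{\alpha_2+\alpha_3}$ is replaced by $H_{\alpha_2}$. Then $\mathfrak n$ and $\mathfrak n'$ are both $\operatorname{ad}h^+$-invariant complements of $\mathfrak g^e$. The transverse Poisson structure on $N=e+\mathfrak n^\perp$ is polynomial of degree $3$, while the one on $N'=e+\mathfrak n'^\perp$ is polynomial of degree $2$. Hence the degree of the transverse Poisson structure depends on the choice of $\operatorname{ad}h^+$-invariant complement.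
   Context: $(H_\alpha,X_\alpha,X_{-\alpha})$ denote Chevalley basis elements for the root $\alpha$. $K$ is the Killing form and $\mathfrak n^\perp$ is the $K$-orthogonal of $\mathfrak n$. Transverse Poisson structure. Choose a basis $Z_1,\dots,Z_k$ of $\mathfrak g^e$ and a basis $X_1,\dots,X_p$ of the complement $\mathfrak n$. Let $(\overline{Z_i},\overline{X_j})$ be the $K$-dual basis, and identify $\mathfrak n^\perp$ with $\mathbb C^k$ via $q\mapsto\sum_s q_s\overline{Z_s}$. Define: - $C_N(q)_{l,m}=K(e+\sum_s q_s\overline{Z_s},[X_l,X_m])$; - $D_N(q)_{l,j}=K(\sum_s q_s\overline{Z_s},[X_l,Z_j])$; - $A_N(q)_{i,j}=K(\sum_s q_s\overline{Z_s},[Z_i,Z_j])$. Then $\Lambda_N(q)=A_N+{}^tD_N\,C_N^{-1}D_N$. For $\operatorname{ad}h^+$-invariant complements, $\Lambda_N(q)$ is polynomial in $q$. Its degree is the maximal degree of its entries; this does not depend on the chosen bases. *)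

theory Defs
  imports "HOL-Analysis.Analysis"
begin

text \<open>The Lie algebra sl_4(C), realised inside 4x4 complex matrices (indices 0..3 of type 4).\<close>

type_synonym mat4 = "complex^4^4"

definition Em :: "4 \<Rightarrow> 4 \<Rightarrow> mat4" where
  "Em i j = (\<chi> a b. if a = i \<and> b = j then 1 else 0)"

definition brk :: "mat4 \<Rightarrow> mat4 \<Rightarrow> mat4" where
  "brk A B = A ** B - B ** A"

definition smul :: "complex \<Rightarrow> mat4 \<Rightarrow> mat4" where
  "smul c A = (\<chi> i j. c * A $ i $ j)"

definition sl4 :: "mat4 set" where
  "sl4 = {A. trace A = 0}"

text \<open>Killing form: trace of ad X o ad Y.  Computed on gl_4 (basis Em i j); since ad vanishes on
  the centre of gl_4 = sl_4 + C*I, this equals the trace on sl_4 for X, Y in sl_4.\<close>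
definition killing :: "mat4 \<Rightarrow> mat4 \<Rightarrow> complex" where
  "killing X Y = (\<Sum>i\<in>UNIV. \<Sum>j\<in>UNIV. (brk X (brk Y (Em i j))) $ i $ j)"

text \<open>Simple roots alpha_1 = eps_1-eps_2, alpha_2 = eps_2-eps_3,
  alpha_3 = eps_3-eps_4 (eps_1..eps_4 correspond to indices 0..3).\<close>
definition Hr :: "4 \<Rightarrow> 4 \<Rightarrow> mat4" where
  "Hr i j = Em i i - Em j j"

abbreviation "H_a1 \<equiv> Hr 0 1"
abbreviation "H_a2 \<equiv> Hr 1 2"
abbreviation "H_a3 \<equiv> Hr 2 3"
abbreviation "H_a23 \<equiv> Hr 1 3"
abbreviation "X_a1 \<equiv> Em 0 1"
abbreviation "X_a2 \<equiv> Em 1 2"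
abbreviation "X_a23 \<equiv> Em 1 3"
abbreviation "X_ma1 \<equiv> Em 1 0"
abbreviation "X_ma2 \<equiv> Em 2 1"
abbreviation "X_ma3 \<equiv> Em 3 2"
abbreviation "X_ma12 \<equiv> Em 2 0"
abbreviation "X_ma23 \<equiv> Em 3 1"
abbreviation "X_ma123 \<equiv> Em 3 0"

definition e_nil :: mat4 where "e_nil = X_a1 + X_a23"

definition h_plus :: mat4 where
  "h_plus = smul 2 H_a1 + smul 2 H_a2 + smul 2 H_a3"

definition cspan :: "mat4 list \<Rightarrow> mat4 set" where
  "cspan vs = {A. \<exists>c::nat \<Rightarrow> complex. A = (\<Sum>i<length vs. smul (c i) (vs ! i))}"

definition n_compl :: "mat4 set" where
  "n_compl = cspan [H_a1, H_a23, X_a1, X_a2, X_ma2, X_ma1, X_ma3, X_ma12, X_ma23, X_ma123]"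

definition n_compl' :: "mat4 set" where
  "n_compl' = cspan [H_a1, H_a2, X_a1, X_a2, X_ma2, X_ma1, X_ma3, X_ma12, X_ma23, X_ma123]"

definition centralizer :: "mat4 \<Rightarrow> mat4 set" where
  "centralizer e = {A \<in> sl4. brk e A = 0}"

definition csubspace :: "mat4 set \<Rightarrow> bool" where
  "csubspace S \<longleftrightarrow> 0 \<in> S \<and> (\<forall>A\<in>S. \<forall>B\<in>S. A + B \<in> S) \<and> (\<forall>c. \<forall>A\<in>S. smul c A \<in> S)"

definition is_complement :: "mat4 set \<Rightarrow> mat4 set \<Rightarrow> bool" where
  "is_complement n V \<longleftrightarrow> csubspace n \<and> n \<subseteq> sl4 \<and> n \<inter> V = {0} \<and>
     {A + B | A B. A \<in> n \<and> B \<in> V} = sl4"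

definition ad_invariant :: "mat4 \<Rightarrow> mat4 set \<Rightarrow> bool" where
  "ad_invariant h n \<longleftrightarrow> (\<forall>A\<in>n. brk h A \<in> n)"

definition is_basis :: "('i::finite \<Rightarrow> mat4) \<Rightarrow> mat4 set \<Rightarrow> bool" where
  "is_basis B S \<longleftrightarrow>
     (\<forall>c. (\<Sum>i\<in>UNIV. smul (c i) (B i)) = 0 \<longrightarrow> (\<forall>i. c i = 0)) \<and>
     S = {A. \<exists>c. A = (\<Sum>i\<in>UNIV. smul (c i) (B i))}"

text \<open>The matrices C_N, D_N, A_N and Lambda_N; Zb is the K-dual family (Zbar_s), q in C^k.\<close>
definition CN :: "('k::finite \<Rightarrow> mat4) \<Rightarrow> ('p::finite \<Rightarrow> mat4) \<Rightarrow> complex^'k \<Rightarrow> complex^'p^'p" where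
  "CN Zb X q = (\<chi> l m. killing (e_nil + (\<Sum>s\<in>UNIV. smul (q $ s) (Zb s))) (brk (X l) (X m)))"

definition DN :: "('k::finite \<Rightarrow> mat4) \<Rightarrow> ('p::finite \<Rightarrow> mat4) \<Rightarrow> ('k \<Rightarrow> mat4) \<Rightarrow> complex^'k \<Rightarrow> complex^'k^'p" where
  "DN Zb X Z q = (\<chi> l j. killing (\<Sum>s\<in>UNIV. smul (q $ s) (Zb s)) (brk (X l) (Z j)))"

definition AN :: "('k::finite \<Rightarrow> mat4) \<Rightarrow> ('k \<Rightarrow> mat4) \<Rightarrow> complex^'k \<Rightarrow> complex^'k^'k" where
  "AN Zb Z q = (\<chi> i j. killing (\<Sum>s\<in>UNIV. smul (q $ s) (Zb s)) (brk (Z i) (Z j)))"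

definition LambdaN :: "('k::finite \<Rightarrow> mat4) \<Rightarrow> ('p::finite \<Rightarrow> mat4) \<Rightarrow> ('k \<Rightarrow> mat4) \<Rightarrow> complex^'k \<Rightarrow> complex^'k^'k" where
  "LambdaN Zb X Z q = AN Zb Z q + transpose (DN Zb X Z q) ** matrix_inv (CN Zb X q) ** DN Zb X Z q"

definition dual_part :: "('k::finite \<Rightarrow> mat4) \<Rightarrow> ('k \<Rightarrow> mat4) \<Rightarrow> ('p::finite \<Rightarrow> mat4) \<Rightarrow> bool" where
  "dual_part Zb Z X \<longleftrightarrow> (\<forall>s. Zb s \<in> sl4) \<and>
     (\<forall>s i. killing (Zb s) (Z i) = (if s = i then 1 else 0)) \<and> (\<forall>s l. killing (Zb s) (X l) = 0)"

definition poly_deg_le_on :: "(complex^'k::finite) set \<Rightarrow> (complex^'k \<Rightarrow> complex) \<Rightarrow> nat \<Rightarrow> bool" where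
  "poly_deg_le_on S f d \<longleftrightarrow> (\<exists>c :: ('k \<Rightarrow> nat) \<Rightarrow> complex.
     finite {a. c a \<noteq> 0} \<and> (\<forall>a. c a \<noteq> 0 \<longrightarrow> (\<Sum>i\<in>UNIV. a i) \<le> d) \<and>
     (\<forall>q\<in>S. f q = (\<Sum>a\<in>{a. c a \<noteq> 0}. c a * (\<Prod>i\<in>UNIV. (q $ i) ^ a i))))"

definition mat_poly_degree_on :: "(complex^'k::finite) set \<Rightarrow> (complex^'k \<Rightarrow> complex^'m::finite^'n::finite) \<Rightarrow> nat \<Rightarrow> bool" where
  "mat_poly_degree_on S L d \<longleftrightarrow> (\<forall>i j. poly_deg_le_on S (\<lambda>q. L q $ i $ j) d) \<and>
     (d > 0 \<longrightarrow> \<not> (\<forall>i j. poly_deg_le_on S (\<lambda>q. L q $ i $ j) (d - 1)))"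

definition transverse_degree :: "'k::finite itself \<Rightarrow> 'p::finite itself \<Rightarrow> mat4 set \<Rightarrow> nat \<Rightarrow> bool" where
  "transverse_degree _ _ n d \<longleftrightarrow>
     (\<exists>(Z::'k \<Rightarrow> mat4) (X::'p \<Rightarrow> mat4) Zb. is_basis Z (centralizer e_nil) \<and> is_basis X n \<and>
        dual_part Zb Z X) \<and>
     (\<forall>(Z::'k \<Rightarrow> mat4) (X::'p \<Rightarrow> mat4) Zb. is_basis Z (centralizer e_nil) \<longrightarrow> is_basis X n \<longrightarrow>
        dual_part Zb Z X \<longrightarrow>
        mat_poly_degree_on {q. invertible (CN Zb X q)} (LambdaN Zb X Z) d)"

end

theory Submission
  imports Defs "HOL-Computational_Algebra.Polynomial"
begin


lemma exhaust_4': fixes x :: 4 shows "x = 0 \<or> x = 1 \<or> x = 2 \<or> x = 3"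
proof (induct x)
  case (of_int z)
  then have "z = 0 \<or> z = 1 \<or> z = 2 \<or> z = 3" by (simp; presburger)
  then show ?case by auto
qed

lemma exhaust_5: fixes x :: 5 shows "x = 0 \<or> x = 1 \<or> x = 2 \<or> x = 3 \<or> x = 4"
proof (induct x)
  case (of_int z)
  then have "z = 0 \<or> z = 1 \<or> z = 2 \<or> z = 3 \<or> z = 4" by (simp; presburger)
  then show ?case by auto
qed

lemma exhaust_10: fixes x :: 10 shows "x = 0 \<or> x = 1 \<or> x = 2 \<or> x = 3 \<or> x = 4 \<or> x = 5 \<or> x = 6 \<or> x = 7 \<or> x = 8 \<or> x = 9"
proof (induct x)
  case (of_int z)
  then have "z = 0 \<or> z = 1 \<or> z = 2 \<or> z = 3 \<or> z = 4 \<or> z = 5 \<or> z = 6 \<or> z = 7 \<or> z = 8 \<or> z = 9" by (simp; presburger)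
  then show ?case by auto
qed

lemma UNIV_4': "(UNIV::4 set) = {0,1,2,3}" using exhaust_4' by auto
lemma UNIV_5: "(UNIV::5 set) = {0,1,2,3,4}" using exhaust_5 by auto
lemma UNIV_10: "(UNIV::10 set) = {0,1,2,3,4,5,6,7,8,9}" using exhaust_10 by auto

lemma sum_4': "sum f (UNIV::4 set) = f 0 + f 1 + f 2 + f 3"
  unfolding UNIV_4' by (simp add: ac_simps)
lemma sum_5: "sum f (UNIV::5 set) = f 0 + f 1 + f 2 + f 3 + f 4"
  unfolding UNIV_5 by (simp add: ac_simps)
lemma sum_10: "sum f (UNIV::10 set) = f 0 + f 1 + f 2 + f 3 + f 4 + f 5 + f 6 + f 7 + f 8 + f 9"
  unfolding UNIV_10 by (simp add: ac_simps)

lemma forall_4': "(\<forall>i::4. P i) \<longleftrightarrow> P 0 \<and> P 1 \<and> P 2 \<and> P 3"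
  by (metis exhaust_4')
lemma forall_5: "(\<forall>i::5. P i) \<longleftrightarrow> P 0 \<and> P 1 \<and> P 2 \<and> P 3 \<and> P 4"
  by (metis exhaust_5)
lemma forall_10: "(\<forall>i::10. P i) \<longleftrightarrow> P 0 \<and> P 1 \<and> P 2 \<and> P 3 \<and> P 4 \<and> P 5 \<and> P 6 \<and> P 7 \<and> P 8 \<and> P 9"
  by (metis exhaust_10)

lemma smul_apply [simp]: "smul c A $ i $ j = c * A $ i $ j"
  by (simp add: smul_def)

lemma mat_eq_iff: "(A::mat4) = B \<longleftrightarrow> (\<forall>i j. A $ i $ j = B $ i $ j)"
  by (simp add: vec_eq_iff)

lemma smul_add: "smul c (A + B) = smul c A + smul c B"
  by (simp add: mat_eq_iff distrib_left)
lemma smul_add_left: "smul (a + b) A = smul a A + smul b A"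
  by (simp add: mat_eq_iff distrib_right)
lemma smul_smul [simp]: "smul a (smul b A) = smul (a * b) A"
  by (simp add: mat_eq_iff)
lemma smul_zero [simp]: "smul c 0 = 0"
  by (simp add: mat_eq_iff)
lemma smul_0 [simp]: "smul 0 A = 0"
  by (simp add: mat_eq_iff)
lemma smul_1 [simp]: "smul 1 A = A"
  by (simp add: mat_eq_iff)
lemma smul_minus: "smul c (A - B) = smul c A - smul c B"
  by (simp add: mat_eq_iff algebra_simps)
lemma smul_uminus_left: "smul (- c) A = - smul c A"
  by (simp add: mat_eq_iff)

lemma sum_entry [simp]: "(sum f S :: mat4) $ i $ j = (\<Sum>x\<in>S. f x $ i $ j)"
  by simp

lemma smul_sum: "smul c (sum f S) = (\<Sum>x\<in>S. smul c (f x))"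
  by (simp add: mat_eq_iff sum_distrib_left)
lemma sum_smul: "smul (sum c S) A = (\<Sum>x\<in>S. smul (c x) A)"
  by (simp add: mat_eq_iff sum_distrib_right)

lemma additive_sum:
  fixes h :: "'a::comm_monoid_add \<Rightarrow> 'b::ab_group_add"
  assumes "\<And>a b. h (a + b) = h a + h b"
  shows "h (sum g S) = (\<Sum>i\<in>S. h (g i))"
proof -
  have h0: "h 0 = 0" using assms[of 0 0] by simp
  show ?thesis
  proof (cases "finite S")
    case True
    then show ?thesis by (induct S rule: finite_induct) (auto simp: h0 assms)
  next
    case False
    then show ?thesis by (simp add: h0)
  qed
qed

lemma mm_entry: "((A::mat4) ** B) $ i $ j = (\<Sum>k\<in>UNIV. A $ i $ k * B $ k $ j)"
  by (simp add: matrix_matrix_mult_def)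

lemma mm_add_left: "((A::mat4) + B) ** (C::mat4) = A ** C + B ** C"
  by (simp add: mat_eq_iff mm_entry sum.distrib algebra_simps)
lemma mm_add_right: "(C::mat4) ** ((A::mat4) + B) = C ** A + C ** B"
  by (simp add: mat_eq_iff mm_entry sum.distrib algebra_simps)
lemma mm_diff_left: "((A::mat4) - B) ** (C::mat4) = A ** C - B ** C"
  by (simp add: mat_eq_iff mm_entry sum_subtractf algebra_simps)
lemma mm_diff_right: "(C::mat4) ** ((A::mat4) - B) = C ** A - C ** B"
  by (simp add: mat_eq_iff mm_entry sum_subtractf algebra_simps)
lemma brk_add_left: "brk (A + B) C = brk A C + brk B C"
  by (simp add: brk_def mm_add_left mm_add_right)
lemma brk_add_right: "brk A (B + C) = brk A B + brk A C"
  by (simp add: brk_def mm_add_left mm_add_right)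
lemma brk_smul_left: "brk (smul c A) B = smul c (brk A B)"
  by (simp add: mat_eq_iff brk_def mm_entry sum_distrib_left algebra_simps)
lemma brk_smul_right: "brk A (smul c B) = smul c (brk A B)"
  by (simp add: mat_eq_iff brk_def mm_entry sum_distrib_left algebra_simps)
lemma brk_antisym: "brk A B = - brk B A"
  by (simp add: brk_def)
lemma brk_zero_left [simp]: "brk 0 A = 0" and brk_zero_right [simp]: "brk A 0 = 0"
  by (simp_all add: brk_def)
lemma brk_sum_left: "brk (sum f S) C = (\<Sum>i\<in>S. brk (f i) C)"
  by (rule additive_sum) (rule brk_add_left)
lemma brk_sum_right: "brk C (sum f S) = (\<Sum>i\<in>S. brk C (f i))"
  by (rule additive_sum) (rule brk_add_right)
lemma brk_self [simp]: "brk A A = 0"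
  by (simp add: brk_def)

section \<open>Killing form\<close>

lemma mult_Em_right: "((A::mat4) ** Em i j) $ a $ b = (if b = j then A $ a $ i else 0)"
  by (simp add: mm_entry Em_def if_distrib[of "\<lambda>x. _ * x"] cong: if_cong)

lemma mult_Em_left: "(Em i j ** (A::mat4)) $ a $ b = (if a = i then A $ j $ b else 0)"
  by (simp add: mm_entry Em_def if_distrib[of "\<lambda>x. x * _"] cong: if_cong)

lemma killing_entry:
  "brk X (brk Y (Em i j)) $ i $ j = (X ** Y) $ i $ i - X $ i $ i * Y $ j $ j - Y $ i $ i * X $ j $ j + (Y ** X) $ j $ j"
proof -
  have "brk X (brk Y (Em i j)) $ i $ j =
    (\<Sum>k\<in>UNIV. X $ i $ k * (Y $ k $ i - (if k = i then Y $ j $ j else 0))) -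
    (\<Sum>k\<in>UNIV. ((if k = j then Y $ i $ i else 0) - Y $ j $ k) * X $ k $ j)"
    by (simp add: brk_def mm_entry[of X] mm_entry[of _ X] mult_Em_right mult_Em_left)
  also have "\<dots> = (X ** Y) $ i $ i - X $ i $ i * Y $ j $ j - Y $ i $ i * X $ j $ j + (Y ** X) $ j $ j"
    by (simp add: mm_entry algebra_simps sum_subtractf if_distrib[of "\<lambda>x. _ * x"] if_distrib[of "\<lambda>x. x * _"] cong: if_cong)
  finally show ?thesis .
qed

lemma killing_formula: "killing X Y = 8 * trace (X ** Y) - 2 * trace X * trace Y"
proof -
  have tr: "trace (Y ** X) = trace (X ** Y)" by (rule trace_mul_sym)
  have "killing X Y = (\<Sum>i\<in>UNIV. \<Sum>j\<in>UNIV. (X ** Y) $ i $ i - X $ i $ i * Y $ j $ j - Y $ i $ i * X $ j $ j + (Y ** X) $ j $ j)"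
    by (simp add: killing_def killing_entry)
  also have "\<dots> = 4 * trace (X ** Y) - trace X * trace Y - trace Y * trace X + 4 * trace (Y ** X)"
    by (simp add: sum.distrib sum_subtractf trace_def sum_product sum_distrib_left[symmetric])
  finally show ?thesis using tr by simp
qed

lemma trace_brk [simp]: "trace (brk A B) = 0"
  by (simp add: brk_def trace_sub trace_mul_sym[of A B])

lemma killing_brk: "killing X (brk A B) = 8 * trace (X ** brk A B)"
  by (simp add: killing_formula)

lemma trace_smul: "trace (smul c A) = c * trace A"
  by (simp add: trace_def sum_distrib_left)
lemma mm_smul_left: "smul c A ** B = smul c (A ** B)"
  by (simp add: mat_eq_iff mm_entry sum_distrib_left algebra_simps)
lemma mm_smul_right: "A ** smul c B = smul c (A ** B)"
  by (simp add: mat_eq_iff mm_entry sum_distrib_left algebra_simps)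

lemma killing_sym: "killing X Y = killing Y X"
  by (simp add: killing_formula trace_mul_sym[of X Y])

lemma killing_add_left: "killing (A + B) C = killing A C + killing B C"
  by (simp add: killing_formula mm_add_left trace_add algebra_simps)
lemma killing_add_right: "killing C (A + B) = killing C A + killing C B"
  by (simp add: killing_formula mm_add_right trace_add algebra_simps)
lemma killing_smul_left: "killing (smul c A) B = c * killing A B"
  by (simp add: killing_formula mm_smul_left trace_smul algebra_simps)
lemma killing_smul_right: "killing A (smul c B) = c * killing A B"
  by (simp add: killing_formula mm_smul_right trace_smul algebra_simps)
lemma killing_sum_left: "killing (sum f S) C = (\<Sum>i\<in>S. killing (f i) C)"
  by (rule additive_sum[where h="\<lambda>x. killing x C"]) (rule killing_add_left)
lemma killing_sum_right: "killing C (sum f S) = (\<Sum>i\<in>S. killing C (f i))"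
  by (rule additive_sum) (rule killing_add_right)
lemma killing_zero_left [simp]: "killing 0 A = 0" and killing_zero_right [simp]: "killing A 0 = 0"
  by (simp_all add: killing_formula trace_def)
lemma killing_uminus_right: "killing A (- B) = - killing A B"
proof -
  have "killing A B + killing A (-B) = 0" using killing_add_right[of A B "-B"] by simp
  then have "- killing A B = killing A (-B)" by (simp only: neg_eq_iff_add_eq_0)
  then show ?thesis by simp
qed
lemma killing_uminus_left: "killing (- A) B = - killing A B"
proof -
  have "killing A B + killing (-A) B = 0" using killing_add_left[of A "-A" B] by simp
  then have "- killing A B = killing (-A) B" by (simp only: neg_eq_iff_add_eq_0)
  then show ?thesis by simp
qed
lemma killing_diff_right: "killing A (B - C) = killing A B - killing A C"
  using killing_add_right[of A B "-C"] by (simp add: killing_uminus_right)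
lemma killing_diff_left: "killing (B - C) A = killing B A - killing C A"
  using killing_add_left[of B "-C" A] by (simp add: killing_uminus_left)

lemma killing_invariant: "killing A (brk B C) = killing (brk A B) C"
proof -
  have "trace (A ** (C ** B)) = trace ((B ** A) ** C)"
    by (metis matrix_mul_assoc trace_mul_sym)
  then show ?thesis
    by (simp add: killing_formula brk_def mm_diff_left mm_diff_right trace_sub matrix_mul_assoc
        trace_mul_sym[of "A ** B - B ** A" C] trace_mul_sym[of "B ** A" C] trace_mul_sym[of B C] trace_mul_sym[of B A])
qed




inductive pdeg :: "(complex^'k::finite \<Rightarrow> complex) \<Rightarrow> nat \<Rightarrow> bool" where
  pconst: "pdeg (\<lambda>q. c) d"
| pmono: "pdeg f d \<Longrightarrow> d \<le> d' \<Longrightarrow> pdeg f d'"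
| padd: "pdeg f d \<Longrightarrow> pdeg g d \<Longrightarrow> pdeg (\<lambda>q. f q + g q) d"
| pvar: "pdeg f d \<Longrightarrow> pdeg (\<lambda>q. q $ i * f q) (Suc d)"

lemma pdeg_cmul: "pdeg f d \<Longrightarrow> pdeg (\<lambda>q. c * f q) d"
proof (induction rule: pdeg.induct)
  case (pconst c' d) then show ?case using pdeg.pconst by blast
next
  case (pmono f d d') then show ?case using pdeg.pmono by blast
next
  case (padd f d g) then show ?case using pdeg.padd[of "\<lambda>q. c * f q" d "\<lambda>q. c * g q"] by (simp add: distrib_left)
next
  case (pvar f d i) then show ?case using pdeg.pvar[of "\<lambda>q. c * f q" d i] by (simp add: ac_simps)
qed

lemma pdeg_mult: "pdeg f d1 \<Longrightarrow> pdeg g d2 \<Longrightarrow> pdeg (\<lambda>q. f q * g q) (d1 + d2)"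
proof (induction arbitrary: d2 rule: pdeg.induct)
  case (pconst c d)
  then show ?case using pdeg_cmul[of g d2 c] pdeg.pmono by fastforce
next
  case (pmono f d d')
  then show ?case using pdeg.pmono by (metis add_le_mono1)
next
  case (padd f d g')
  then show ?case using pdeg.padd[of "\<lambda>q. f q * g q" "d + d2" "\<lambda>q. g' q * g q"] by (simp add: distrib_right)
next
  case (pvar f d i)
  then show ?case using pdeg.pvar[of "\<lambda>q. f q * g q" "d + d2" i] by (simp add: ac_simps)
qed

lemma pdeg_var: "pdeg (\<lambda>q. q $ i) (Suc 0)"
  using pdeg.pvar[OF pdeg.pconst[of 1 0], of i] by simp

lemma pdeg_zero: "pdeg (\<lambda>q. 0) d" by (rule pconst)

lemma pdeg_sum: "finite S \<Longrightarrow> (\<And>i. i \<in> S \<Longrightarrow> pdeg (f i) d) \<Longrightarrow> pdeg (\<lambda>q. \<Sum>i\<in>S. f i q) d"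
proof (induction S rule: finite_induct)
  case empty then show ?case by (simp add: pdeg_zero)
next
  case (insert x F)
  then show ?case using pdeg.padd[of "f x" d "\<lambda>q. \<Sum>i\<in>F. f i q"] by simp
qed

lemma pdeg_prod: "finite S \<Longrightarrow> (\<And>i. i \<in> S \<Longrightarrow> pdeg (f i) (d i)) \<Longrightarrow> pdeg (\<lambda>q. \<Prod>i\<in>S. f i q) (\<Sum>i\<in>S. d i)"
proof (induction S rule: finite_induct)
  case empty then show ?case by (simp add: pconst)
next
  case (insert x F)
  then show ?case using pdeg_mult[of "f x" "d x" "\<lambda>q. \<Prod>i\<in>F. f i q"] by simp
qed

lemma pdeg_power: "pdeg f d \<Longrightarrow> pdeg (\<lambda>q. f q ^ n) (n * d)"
proof (induction n)
  case 0 then show ?case by (simp add: pconst)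
next
  case (Suc n) then show ?case using pdeg_mult[of f d "\<lambda>q. f q ^ n" "n * d"] by simp
qed

lemma pdeg_var_pow: "pdeg (\<lambda>q. q $ i ^ n) n"
  using pdeg_power[OF pdeg_var, of i n] by simp

lemma pdeg_uminus: "pdeg f d \<Longrightarrow> pdeg (\<lambda>q. - f q) d"
  using pdeg_cmul[of f d "-1"] by simp

lemma pdeg_diff: "pdeg f d \<Longrightarrow> pdeg g d \<Longrightarrow> pdeg (\<lambda>q. f q - g q) d"
  using pdeg.padd[of f d "\<lambda>q. - g q"] pdeg_uminus[of g d] by simp

lemma pdeg_linear: "pdeg (\<lambda>q. \<Sum>j\<in>UNIV. c j * q $ j) (Suc 0)"
  by (rule pdeg_sum) (auto intro: pdeg_cmul pdeg_var)

lemma pdeg_subst: "pdeg f d \<Longrightarrow> pdeg (\<lambda>q. f ((Q::complex^'k::finite^'l::finite) *v q)) d"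
proof (induction rule: pdeg.induct)
  case (pconst c d) then show ?case by (rule pdeg.pconst)
next
  case (pmono f d d') then show ?case using pdeg.pmono by blast
next
  case (padd f d g) then show ?case using pdeg.padd by blast
next
  case (pvar f d i)
  have "pdeg (\<lambda>q. (Q *v q) $ i) (Suc 0)"
    unfolding matrix_vector_mult_def by (simp add: pdeg_linear)
  from pdeg_mult[OF this pvar.IH] show ?case by simp
qed

lemma sum_supp_extend:
  fixes c :: "('k \<Rightarrow> nat) \<Rightarrow> complex"
  assumes "finite U" "{a. c a \<noteq> 0} \<subseteq> U"
  shows "(\<Sum>a\<in>{a. c a \<noteq> 0}. c a * m a) = (\<Sum>a\<in>U. c a * m a)"
  by (rule sum.mono_neutral_left) (use assms in auto)

definition monom_val :: "complex^'k::finite \<Rightarrow> ('k \<Rightarrow> nat) \<Rightarrow> complex" where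
  "monom_val q a = (\<Prod>i\<in>UNIV. (q $ i) ^ a i)"

lemma pdeg_imp_coeffs:
  assumes "pdeg f d"
  shows "\<exists>c :: ('k::finite \<Rightarrow> nat) \<Rightarrow> complex. finite {a. c a \<noteq> 0} \<and> (\<forall>a. c a \<noteq> 0 \<longrightarrow> (\<Sum>i\<in>UNIV. a i) \<le> d) \<and>
     (\<forall>q. f q = (\<Sum>a\<in>{a. c a \<noteq> 0}. c a * monom_val q a))"
  using assms
proof (induction rule: pdeg.induct)
  case (pconst c d)
  let ?c = "\<lambda>a::'k \<Rightarrow> nat. if a = (\<lambda>_. 0) then c else 0"
  have sub: "{a. ?c a \<noteq> 0} \<subseteq> {\<lambda>_. 0}" by auto
  have "finite {a. ?c a \<noteq> 0}" using sub finite_subset by blast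
  moreover have "\<forall>a. ?c a \<noteq> 0 \<longrightarrow> (\<Sum>i\<in>UNIV. a i) \<le> d" by auto
  moreover have "\<forall>q. c = (\<Sum>a\<in>{a. ?c a \<noteq> 0}. ?c a * monom_val q a)"
  proof
    fix q
    have "(\<Sum>a\<in>{a. ?c a \<noteq> 0}. ?c a * monom_val q a) = (\<Sum>a\<in>{\<lambda>_. 0}. ?c a * monom_val q a)"
      by (rule sum_supp_extend) (use sub in auto)
    also have "\<dots> = c" by (simp add: monom_val_def)
    finally show "c = (\<Sum>a\<in>{a. ?c a \<noteq> 0}. ?c a * monom_val q a)" by simp
  qed
  ultimately show ?case by (intro exI[of _ ?c]) blast
next
  case (pmono f d d')
  then show ?case by (meson le_trans)
next
  case (padd f d g)
  from padd.IH obtain c1 c2 where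
    c1: "finite {a. c1 a \<noteq> 0}" "\<forall>a. c1 a \<noteq> 0 \<longrightarrow> (\<Sum>i\<in>UNIV. a i) \<le> d" "\<forall>q. f q = (\<Sum>a\<in>{a. c1 a \<noteq> 0}. c1 a * monom_val q a)" and
    c2: "finite {a. c2 a \<noteq> 0}" "\<forall>a. c2 a \<noteq> 0 \<longrightarrow> (\<Sum>i\<in>UNIV. a i) \<le> d" "\<forall>q. g q = (\<Sum>a\<in>{a. c2 a \<noteq> 0}. c2 a * monom_val q a)"
    by blast
  let ?U = "{a. c1 a \<noteq> 0} \<union> {a. c2 a \<noteq> 0}"
  let ?c = "\<lambda>a. c1 a + c2 a"
  have sub: "{a. ?c a \<noteq> 0} \<subseteq> ?U" by auto
  have fU: "finite ?U" using c1 c2 by simp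
  have "finite {a. ?c a \<noteq> 0}" using sub fU finite_subset by blast
  moreover have "\<forall>a. ?c a \<noteq> 0 \<longrightarrow> (\<Sum>i\<in>UNIV. a i) \<le> d" using c1 c2 by (metis add.left_neutral add_0_right)
  moreover have "\<forall>q. f q + g q = (\<Sum>a\<in>{a. ?c a \<noteq> 0}. ?c a * monom_val q a)"
  proof
    fix q
    have "(\<Sum>a\<in>{a. ?c a \<noteq> 0}. ?c a * monom_val q a) = (\<Sum>a\<in>?U. ?c a * monom_val q a)"
      by (rule sum_supp_extend[OF fU sub])
    also have "\<dots> = (\<Sum>a\<in>?U. c1 a * monom_val q a) + (\<Sum>a\<in>?U. c2 a * monom_val q a)"
      by (simp add: sum.distrib distrib_right)
    also have "(\<Sum>a\<in>?U. c1 a * monom_val q a) = f q"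
      using c1 sum_supp_extend[OF fU, of c1 "monom_val q"] by auto
    also have "(\<Sum>a\<in>?U. c2 a * monom_val q a) = g q"
      using c2 sum_supp_extend[OF fU, of c2 "monom_val q"] by auto
    finally show "f q + g q = (\<Sum>a\<in>{a. ?c a \<noteq> 0}. ?c a * monom_val q a)" by simp
  qed
  ultimately show ?case by (intro exI[of _ ?c]) blast
next
  case (pvar f d i)
  from pvar.IH obtain c where
    c: "finite {a. c a \<noteq> 0}" "\<forall>a. c a \<noteq> 0 \<longrightarrow> (\<Sum>i\<in>UNIV. a i) \<le> d" "\<forall>q. f q = (\<Sum>a\<in>{a. c a \<noteq> 0}. c a * monom_val q a)"
    by blast
  define s where "s = (\<lambda>b::'k \<Rightarrow> nat. b(i := Suc (b i)))"
  define c' where "c' = (\<lambda>a::'k \<Rightarrow> nat. if a i \<noteq> 0 then c (a(i := a i - 1)) else 0)"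
  have inj: "inj s" unfolding s_def inj_def by (metis fun_upd_same fun_upd_triv fun_upd_upd diff_Suc_1)
  have supp: "{a. c' a \<noteq> 0} = s ` {a. c a \<noteq> 0}"
  proof
    show "{a. c' a \<noteq> 0} \<subseteq> s ` {a. c a \<noteq> 0}"
    proof
      fix a assume "a \<in> {a. c' a \<noteq> 0}"
      then have a: "a i \<noteq> 0" "c (a(i := a i - 1)) \<noteq> 0" unfolding c'_def by (auto split: if_splits)
      have "a = s (a(i := a i - 1))" unfolding s_def using a(1) by auto
      then show "a \<in> s ` {a. c a \<noteq> 0}" using a(2) by blast
    qed
  next
    show "s ` {a. c a \<noteq> 0} \<subseteq> {a. c' a \<noteq> 0}"
      unfolding s_def c'_def by auto
  qed
  have c's: "c' (s b) = c b" for b unfolding c'_def s_def by simp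
  have sumdeg: "(\<Sum>j\<in>UNIV. s b j) = Suc (\<Sum>j\<in>UNIV. b j)" for b
  proof -
    have "(\<Sum>j\<in>UNIV. s b j) = (\<Sum>j\<in>UNIV. b j + (if j = i then 1 else 0))"
      unfolding s_def by (rule sum.cong) auto
    also have "\<dots> = (\<Sum>j\<in>UNIV. b j) + 1" by (simp add: sum.distrib)
    finally show ?thesis by simp
  qed
  have mv: "monom_val q (s b) = q $ i * monom_val q b" for q b
  proof -
    have "monom_val q (s b) = (\<Prod>j\<in>UNIV. q $ j ^ b j * (if j = i then q $ j else 1))"
      unfolding monom_val_def s_def by (rule prod.cong) auto
    also have "\<dots> = monom_val q b * q $ i"
      by (simp add: prod.distrib monom_val_def)
    finally show ?thesis by simp
  qed
  have "finite {a. c' a \<noteq> 0}" using supp c(1) by simp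
  moreover have "\<forall>a. c' a \<noteq> 0 \<longrightarrow> (\<Sum>i\<in>UNIV. a i) \<le> Suc d"
  proof (intro allI impI)
    fix a assume "c' a \<noteq> 0"
    then have "a \<in> s ` {a. c a \<noteq> 0}" using supp by blast
    then obtain b where "a = s b" "c b \<noteq> 0" by blast
    then show "(\<Sum>i\<in>UNIV. a i) \<le> Suc d" using c(2) sumdeg by simp
  qed
  moreover have "\<forall>q. q $ i * f q = (\<Sum>a\<in>{a. c' a \<noteq> 0}. c' a * monom_val q a)"
  proof
    fix q
    have "(\<Sum>a\<in>{a. c' a \<noteq> 0}. c' a * monom_val q a) = (\<Sum>b\<in>{a. c a \<noteq> 0}. c' (s b) * monom_val q (s b))"
      unfolding supp by (rule sum.reindex[OF inj_on_subset[OF inj], simplified])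
    also have "\<dots> = q $ i * f q"
      using c(3) by (simp add: c's mv sum_distrib_left ac_simps)
    finally show "q $ i * f q = (\<Sum>a\<in>{a. c' a \<noteq> 0}. c' a * monom_val q a)" by simp
  qed
  ultimately show ?case by (intro exI[of _ c']) blast
qed

lemma pdeg_imp_poly_deg_le: "pdeg f d \<Longrightarrow> poly_deg_le_on S f d"
  unfolding poly_deg_le_on_def using pdeg_imp_coeffs[of f d] unfolding monom_val_def by blast

lemma poly_deg_le_imp_pdeg:
  fixes f :: "complex^'k::finite \<Rightarrow> complex"
  assumes "poly_deg_le_on S f d"
  shows "\<exists>g. pdeg g d \<and> (\<forall>q\<in>S. f q = g q)"
proof -
  from assms obtain c :: "('k \<Rightarrow> nat) \<Rightarrow> complex" where
    c: "finite {a. c a \<noteq> 0}" "\<forall>a. c a \<noteq> 0 \<longrightarrow> (\<Sum>i\<in>UNIV. a i) \<le> d"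
       "\<forall>q\<in>S. f q = (\<Sum>a\<in>{a. c a \<noteq> 0}. c a * (\<Prod>i\<in>UNIV. (q $ i) ^ a i))"
    unfolding poly_deg_le_on_def by blast
  have "pdeg (\<lambda>q. \<Sum>a\<in>{a. c a \<noteq> 0}. c a * (\<Prod>i\<in>UNIV. (q $ i) ^ a i)) d"
  proof (rule pdeg_sum[OF c(1)])
    fix a assume a: "a \<in> {a. c a \<noteq> 0}"
    have "pdeg (\<lambda>q. \<Prod>i\<in>UNIV. (q $ i) ^ a i) (\<Sum>i\<in>UNIV. a i)"
      by (rule pdeg_prod) (auto intro: pdeg_var_pow)
    then have "pdeg (\<lambda>q. \<Prod>i\<in>UNIV. (q $ i) ^ a i) d"
      using c(2) a by (auto intro: pmono)
    then show "pdeg (\<lambda>q. c a * (\<Prod>i\<in>UNIV. (q $ i) ^ a i)) d" by (rule pdeg_cmul)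
  qed
  then show ?thesis using c(3) by blast
qed

lemma pdeg_line: "pdeg f d \<Longrightarrow> \<exists>p. degree p \<le> d \<and> (\<forall>t. f (t *s v) = poly p t)"
proof (induction rule: pdeg.induct)
  case (pconst c d)
  show ?case by (rule exI[of _ "[:c:]"]) simp
next
  case (pmono f d d') then show ?case by (meson le_trans)
next
  case (padd f d g)
  then obtain p1 p2 where "degree p1 \<le> d" "\<forall>t. f (t *s v) = poly p1 t" "degree p2 \<le> d" "\<forall>t. g (t *s v) = poly p2 t"
    by blast
  then show ?case by (intro exI[of _ "p1 + p2"]) (auto intro: degree_add_le)
next
  case (pvar f d i)
  then obtain p where p: "degree p \<le> d" "\<forall>t. f (t *s v) = poly p t" by blast
  have "degree ([:0, v $ i:] * p) \<le> Suc d"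
    using degree_mult_le[of "[:0, v $ i:]" p] p(1) by (simp add: degree_pCons_eq_if)
  then show ?case using p(2) by (intro exI[of _ "[:0, v $ i:] * p"]) (auto simp: algebra_simps)
qed

lemma pdeg_det:
  assumes "\<And>i j. pdeg (\<lambda>q. M q $ i $ j) d"
  shows "\<exists>N. pdeg (\<lambda>q. det (M q :: complex^'n::finite^'n)) N"
proof -
  have "pdeg (\<lambda>q. \<Sum>p\<in>{p. p permutes (UNIV::'n set)}. of_int (sign p) * (\<Prod>i\<in>UNIV. M q $ i $ p i)) (\<Sum>i\<in>(UNIV::'n set). d)"
  proof (rule pdeg_sum)
    fix p
    have "pdeg (\<lambda>q. \<Prod>i\<in>UNIV. M q $ i $ p i) (\<Sum>i\<in>(UNIV::'n set). d)"
      by (rule pdeg_prod) (auto intro: assms)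
    then show "pdeg (\<lambda>q. of_int (sign p) * (\<Prod>i\<in>UNIV. M q $ i $ p i)) (\<Sum>i\<in>(UNIV::'n set). d)"
      by (rule pdeg_cmul)
  qed (simp add: finite_permutations)
  then show ?thesis unfolding det_def by blast
qed




section \<open>sl4 and nondegeneracy\<close>

lemma sl4_add: "A \<in> sl4 \<Longrightarrow> B \<in> sl4 \<Longrightarrow> A + B \<in> sl4"
  by (simp add: sl4_def trace_add)
lemma sl4_diff: "A \<in> sl4 \<Longrightarrow> B \<in> sl4 \<Longrightarrow> A - B \<in> sl4"
  by (simp add: sl4_def trace_sub)
lemma sl4_smul: "A \<in> sl4 \<Longrightarrow> smul c A \<in> sl4"
  by (simp add: sl4_def trace_smul)
lemma sl4_zero: "0 \<in> sl4"
  by (simp add: sl4_def trace_def)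
lemma sl4_sum: assumes "\<And>i. i \<in> I \<Longrightarrow> f i \<in> sl4" shows "sum f I \<in> sl4"
proof (cases "finite I")
  case True
  then show ?thesis using assms by (induct I rule: finite_induct) (auto intro: sl4_add sl4_zero)
next
  case False then show ?thesis by (simp add: sl4_zero)
qed
lemma sl4_brk: "brk A B \<in> sl4"
  by (simp add: sl4_def)

lemma trace_Em: "trace (Em a b) = (if a = b then 1 else 0)"
  by (cases "a = b") (auto simp: trace_def Em_def intro!: sum.neutral)

lemma trace_Em_mult: "trace (Em a b ** Y) = Y $ b $ a"
  by (simp add: trace_def mult_Em_left)

lemma killing_Em: "killing (Em a b) Y = 8 * Y $ b $ a - 2 * (if a = b then 1 else 0) * trace Y"
  by (simp add: killing_formula trace_Em_mult trace_Em)

lemma Em_sl4: "a \<noteq> b \<Longrightarrow> Em a b \<in> sl4"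
  by (simp add: sl4_def trace_Em)

lemma nondeg:
  assumes Y: "Y \<in> sl4" and K: "\<forall>w\<in>sl4. killing w Y = 0"
  shows "Y = 0"
proof -
  have off: "Y $ i $ j = 0" if "i \<noteq> j" for i j
    using K Em_sl4[of j i] that killing_Em[of j i Y] by auto
  have diag: "Y $ i $ i = Y $ 0 $ 0" for i
  proof (cases "i = 0")
    case False
    have "Em i i - Em 0 0 \<in> sl4" by (simp add: sl4_def trace_sub trace_Em)
    then have "killing (Em i i - Em 0 0) Y = 0" using K by blast
    then show ?thesis by (simp add: killing_diff_left killing_Em)
  qed simp
  have "trace Y = 0" using Y by (simp add: sl4_def)
  then have "4 * Y $ 0 $ 0 = 0" unfolding trace_def sum_4' using diag[of 1] diag[of 2] diag[of 3] by simp
  then have "Y $ 0 $ 0 = 0" by simp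
  then show ?thesis using off diag by (simp add: mat_eq_iff) (metis)
qed

lemma smul_delta_sum: "(\<Sum>j\<in>UNIV. smul (if j = i then 1 else 0) (B j)) = (B (i::'i::finite) :: mat4)"
proof -
  have "(\<Sum>j\<in>UNIV. smul (if j = i then 1 else 0) (B j)) = (\<Sum>j\<in>UNIV. if j = i then B j else 0)"
    by (rule sum.cong) auto
  also have "\<dots> = B i" by (simp add: sum.delta)
  finally show ?thesis .
qed

lemma basis_span: "is_basis B S \<Longrightarrow> x \<in> S \<Longrightarrow> \<exists>c. x = (\<Sum>i\<in>UNIV. smul (c i) (B i))"
  by (simp add: is_basis_def)

lemma basis_mem: "is_basis B S \<Longrightarrow> (\<Sum>i\<in>UNIV. smul (c i) (B i)) \<in> S"
  by (auto simp add: is_basis_def)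

lemma basis_elem: "is_basis B S \<Longrightarrow> B i \<in> S"
  using basis_mem[of B S "\<lambda>j. if j = i then 1 else 0"] by (simp add: smul_delta_sum)

lemma basis_indep: "is_basis B S \<Longrightarrow> (\<Sum>i\<in>UNIV. smul (c i) (B i)) = 0 \<Longrightarrow> c i = 0"
  by (simp add: is_basis_def)

lemma basis_coords:
  assumes "is_basis B S" "\<And>i. Y i \<in> S"
  shows "\<exists>P. \<forall>i. Y i = (\<Sum>k\<in>UNIV. smul (P i k) (B k))"
proof -
  have "\<forall>i. \<exists>c. Y i = (\<Sum>k\<in>UNIV. smul (c k) (B k))" using assms basis_span by blast
  then show ?thesis by metis
qed

lemma csubspace_sum: assumes "csubspace S" "\<And>i. i \<in> I \<Longrightarrow> f i \<in> S" shows "sum f I \<in> S"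
proof (cases "finite I")
  case True
  then show ?thesis using assms by (induct I rule: finite_induct) (auto simp: csubspace_def)
next
  case False
  then show ?thesis using assms by (simp add: csubspace_def)
qed

lemma csubspace_smul: "csubspace S \<Longrightarrow> A \<in> S \<Longrightarrow> smul c A \<in> S"
  by (simp add: csubspace_def)

lemma killing_e_centr: "Z \<in> centralizer e_nil \<Longrightarrow> killing e_nil (brk Y Z) = 0"
proof -
  assume "Z \<in> centralizer e_nil"
  then have "brk e_nil Z = 0" by (simp add: centralizer_def)
  then have "killing e_nil (brk Z Y) = 0" by (simp add: killing_invariant)
  then show ?thesis by (subst brk_antisym) (simp add: killing_uminus_right)
qed

lemma matrix_inv_left:
  fixes A :: "'a::field^'n^'n"
  assumes "invertible A" shows "matrix_inv A ** A = mat 1"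
proof -
  have "\<exists>A'. A ** A' = mat 1 \<and> A' ** A = mat 1" using assms by (simp add: invertible_def)
  then show ?thesis unfolding matrix_inv_def by (rule someI2_ex) blast
qed

definition xq :: "('k::finite \<Rightarrow> mat4) \<Rightarrow> complex^'k \<Rightarrow> mat4" where
  "xq Zb q = e_nil + (\<Sum>s\<in>UNIV. smul (q $ s) (Zb s))"

lemma CN_entry: "CN Zb X q $ l $ m = killing (xq Zb q) (brk (X l) (X m))"
  by (simp add: CN_def xq_def)

lemma DN_entry: "Z j \<in> centralizer e_nil \<Longrightarrow> DN Zb X Z q $ l $ j = killing (xq Zb q) (brk (X l) (Z j))"
  by (simp add: DN_def xq_def killing_add_left killing_e_centr)

lemma AN_entry: "Z j \<in> centralizer e_nil \<Longrightarrow> AN Zb Z q $ i $ j = killing (xq Zb q) (brk (Z i) (Z j))"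
  by (simp add: AN_def xq_def killing_add_left killing_e_centr)

lemma killing_brk_combo:
  "killing x (brk (Z + (\<Sum>l\<in>UNIV. smul (b l) (X l))) Y) = killing x (brk Z Y) + (\<Sum>l\<in>UNIV. b l * killing x (brk (X l) Y))"
  by (simp add: brk_add_left brk_sum_left brk_smul_left killing_add_right killing_sum_right killing_smul_right)

lemma L1:
  fixes Z :: "'k::finite \<Rightarrow> mat4" and X :: "'p::finite \<Rightarrow> mat4" and Zb :: "'k \<Rightarrow> mat4"
    and \<beta> :: "'k \<Rightarrow> 'p \<Rightarrow> complex"
  assumes Zc: "\<And>j. Z j \<in> centralizer e_nil"
    and inv: "invertible (CN Zb X q)"
    and cond: "\<And>i m. killing (xq Zb q) (brk (Z i + (\<Sum>l\<in>UNIV. smul (\<beta> i l) (X l))) (X m)) = 0"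
  shows "LambdaN Zb X Z q $ i $ j = killing (xq Zb q) (brk (Z i + (\<Sum>l\<in>UNIV. smul (\<beta> i l) (X l))) (Z j))"
proof -
  define x where "x = xq Zb q"
  define C where "C = CN Zb X q"
  define D where "D = DN Zb X Z q"
  define Ci where "Ci = matrix_inv C"
  have Cent: "C $ l $ m = killing x (brk (X l) (X m))" for l m by (simp add: C_def x_def CN_entry)
  have Dent: "D $ l $ j = killing x (brk (X l) (Z j))" for l j by (simp add: D_def x_def DN_entry Zc)
  have Casym: "C $ l $ m = - C $ m $ l" for l m
    by (simp add: Cent brk_antisym[of "X l"] killing_uminus_right)
  have star: "D $ m $ i = (\<Sum>l\<in>UNIV. \<beta> i l * C $ l $ m)" for m i
  proof -
    have "killing x (brk (Z i) (X m)) + (\<Sum>l\<in>UNIV. \<beta> i l * C $ l $ m) = 0"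
      using cond[of i m] by (simp add: killing_brk_combo x_def Cent)
    moreover have "killing x (brk (Z i) (X m)) = - D $ m $ i"
      by (simp add: Dent brk_antisym[of "Z i"] killing_uminus_right)
    ultimately show ?thesis by (simp add: neg_eq_iff_add_eq_0[symmetric])
  qed
  define Bm :: "complex^'k^'p" where "Bm = (\<chi> l i. \<beta> i l)"
  have DCB: "D = - (C ** Bm)"
  proof -
    have "D $ m $ i = - (C ** Bm) $ m $ i" for m i
    proof -
      have "(C ** Bm) $ m $ i = (\<Sum>l\<in>UNIV. C $ m $ l * \<beta> i l)"
        by (simp add: matrix_matrix_mult_def Bm_def)
      also have "\<dots> = - (\<Sum>l\<in>UNIV. \<beta> i l * C $ l $ m)"
        by (simp add: Casym[of m] sum_negf[symmetric] mult.commute)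
      finally show ?thesis using star by simp
    qed
    then show ?thesis by (simp add: vec_eq_iff)
  qed
  have CiC: "Ci ** C = mat 1" using inv by (simp add: Ci_def C_def matrix_inv_left)
  have CiD: "Ci ** D = - Bm"
  proof -
    have "Ci ** D = - (Ci ** (C ** Bm))" unfolding DCB
      by (simp add: vec_eq_iff matrix_matrix_mult_def sum_negf)
    also have "\<dots> = - Bm" by (simp add: matrix_mul_assoc CiC)
    finally show ?thesis .
  qed
  have "LambdaN Zb X Z q $ i $ j = AN Zb Z q $ i $ j + (transpose D ** (Ci ** D)) $ i $ j"
    by (simp add: LambdaN_def D_def Ci_def C_def matrix_mul_assoc)
  also have "(transpose D ** (Ci ** D)) $ i $ j = - (\<Sum>l\<in>UNIV. D $ l $ i * \<beta> j l)"
    unfolding CiD by (simp add: matrix_matrix_mult_def transpose_def Bm_def sum_negf)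
  also have "\<dots> = - (\<Sum>l\<in>UNIV. \<Sum>m\<in>UNIV. \<beta> i m * C $ m $ l * \<beta> j l)"
    by (simp add: star sum_distrib_right)
  also have "\<dots> = (\<Sum>l\<in>UNIV. \<beta> i l * (\<Sum>m\<in>UNIV. \<beta> j m * C $ m $ l))"
  proof -
    have "(\<Sum>l\<in>UNIV. \<Sum>m\<in>UNIV. \<beta> i m * C $ m $ l * \<beta> j l) = (\<Sum>m\<in>UNIV. \<Sum>l\<in>UNIV. \<beta> i m * C $ m $ l * \<beta> j l)"
      by (rule sum.swap)
    also have "\<dots> = (\<Sum>m\<in>UNIV. \<Sum>l\<in>UNIV. - (\<beta> i m * (\<beta> j l * C $ l $ m)))"
      by (intro sum.cong refl) (subst Casym, simp add: algebra_simps)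
    also have "\<dots> = - (\<Sum>m\<in>UNIV. \<beta> i m * (\<Sum>l\<in>UNIV. \<beta> j l * C $ l $ m))"
      by (simp add: sum_distrib_left sum_negf)
    finally show ?thesis by simp
  qed
  also have "\<dots> = (\<Sum>l\<in>UNIV. \<beta> i l * D $ l $ j)" by (simp add: star)
  finally show ?thesis
    by (simp add: killing_brk_combo AN_entry Zc Dent x_def)
qed




lemma poly_deg_le_cong:
  fixes f g :: "complex^'k::finite \<Rightarrow> complex"
  assumes fg: "\<And>q. q \<in> S \<Longrightarrow> f q = g q" and g: "poly_deg_le_on S g d"
  shows "poly_deg_le_on S f d"
proof -
  from g obtain c :: "('k \<Rightarrow> nat) \<Rightarrow> complex" where c: "finite {a. c a \<noteq> 0}" "\<forall>a. c a \<noteq> 0 \<longrightarrow> (\<Sum>i\<in>UNIV. a i) \<le> d"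
     "\<forall>q\<in>S. g q = (\<Sum>a\<in>{a. c a \<noteq> 0}. c a * (\<Prod>i\<in>UNIV. (q $ i) ^ a i))"
    unfolding poly_deg_le_on_def by blast
  show ?thesis unfolding poly_deg_le_on_def
    by (rule exI[of _ c]) (use c fg in auto)
qed

lemma pdeg_mulc: "pdeg f d \<Longrightarrow> pdeg (\<lambda>q. f q * c) d"
  using pdeg_cmul[of f d c] by (simp add: mult.commute)

lemma mv_smul: "(A::complex^'n::finite^'m::finite) *v (t *s x) = t *s (A *v x)"
  by (simp add: vec_eq_iff matrix_vector_mult_def vector_scalar_mult_def sum_distrib_left ac_simps)

lemma zero_smul_vec: "(0::complex) *s (x::complex^'n) = 0"
  by (simp add: vec_eq_iff vector_scalar_mult_def)

lemma smul_diff_left: "smul (a - b) A = smul a A - smul b A"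
  by (simp add: mat_eq_iff algebra_simps)

lemma sum_smul_diff: "(\<Sum>i\<in>I. smul (a i) (B i)) - (\<Sum>i\<in>I. smul (b i) (B i)) = (\<Sum>i\<in>I. smul (a i - b i) (B i))"
  by (simp add: smul_diff_left sum_subtractf)

locale refdata =
  fixes n :: "mat4 set" and X0 :: "10 \<Rightarrow> mat4" and Z0 :: "5 \<Rightarrow> mat4" and Zb0 :: "5 \<Rightarrow> mat4"
    and alpha :: "5 \<Rightarrow> 10 \<Rightarrow> complex^5 \<Rightarrow> complex" and R :: "5 \<Rightarrow> 5 \<Rightarrow> complex^5 \<Rightarrow> complex"
    and d :: nat
  assumes Z0_basis: "is_basis Z0 (centralizer e_nil)"
    and X0_basis: "is_basis X0 n"
    and compl: "is_complement n (centralizer e_nil)"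
    and Zb0_dual: "dual_part Zb0 Z0 X0"
    and alpha_eq: "\<And>q k m. killing (xq Zb0 q) (brk (Z0 k + (\<Sum>l\<in>UNIV. smul (alpha k l q) (X0 l))) (X0 m)) = 0"
    and R_eq: "\<And>q k l. killing (xq Zb0 q) (brk (Z0 k + (\<Sum>l'\<in>UNIV. smul (alpha k l' q) (X0 l'))) (Z0 l)) = R k l q"
    and R_deg: "\<And>k l. pdeg (R k l) d"
    and R_top: "\<exists>k l w c. c \<noteq> 0 \<and> (\<forall>t. R k l (t *s w) = c * t ^ d)"
    and d_pos: "d > 0"
begin

abbreviation "ge \<equiv> centralizer e_nil"

lemma X0_in: "X0 l \<in> n" using X0_basis by (rule basis_elem)
lemma Z0_in: "Z0 k \<in> ge" using Z0_basis by (rule basis_elem)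
lemma n_csub: "csubspace n" using compl by (simp add: is_complement_def)
lemma n_sl4: "n \<subseteq> sl4" using compl by (simp add: is_complement_def)
lemma n_cap: "n \<inter> ge = {0}" using compl by (simp add: is_complement_def)
lemma ge_sl4: "ge \<subseteq> sl4" by (auto simp: centralizer_def)
lemma decomp: "A \<in> sl4 \<Longrightarrow> \<exists>B C. B \<in> n \<and> C \<in> ge \<and> A = B + C"
  using compl unfolding is_complement_def by blast

lemma vanish:
  assumes "\<And>l. killing (X0 l) Y = 0" "\<And>k. killing (Z0 k) Y = 0"
  shows "\<forall>w\<in>sl4. killing w Y = 0"
proof
  fix w assume "w \<in> sl4"
  then obtain B C where BC: "B \<in> n" "C \<in> ge" "w = B + C" using decomp by blast
  obtain b where b: "B = (\<Sum>l\<in>UNIV. smul (b l) (X0 l))" using basis_span[OF X0_basis BC(1)] by blast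
  obtain c where c: "C = (\<Sum>k\<in>UNIV. smul (c k) (Z0 k))" using basis_span[OF Z0_basis BC(2)] by blast
  show "killing w Y = 0"
    by (simp add: BC(3) b c killing_add_left killing_sum_left killing_smul_left assms)
qed

lemma nperp:
  assumes Y: "Y \<in> sl4" and K: "\<And>l. killing Y (X0 l) = 0"
  shows "Y = (\<Sum>t\<in>UNIV. smul (killing Y (Z0 t)) (Zb0 t))"
proof -
  define Y' where "Y' = Y - (\<Sum>t\<in>UNIV. smul (killing Y (Z0 t)) (Zb0 t))"
  have Zb0_sl4: "Zb0 t \<in> sl4" for t using Zb0_dual by (simp add: dual_part_def)
  have "Y' \<in> sl4" unfolding Y'_def
    by (intro sl4_diff Y sl4_sum sl4_smul Zb0_sl4)
  moreover have "\<forall>w\<in>sl4. killing w Y' = 0"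
  proof (rule vanish)
    fix l show "killing (X0 l) Y' = 0"
      using Zb0_dual K by (simp add: Y'_def killing_diff_right killing_sum_right killing_smul_right
          dual_part_def killing_sym[of "X0 l"])
  next
    fix k
    have "killing (Z0 k) Y' = killing Y (Z0 k) - (\<Sum>t\<in>UNIV. killing Y (Z0 t) * (if t = k then 1 else 0))"
      using Zb0_dual by (simp add: Y'_def killing_diff_right killing_sum_right killing_smul_right
          dual_part_def killing_sym[of "Z0 k"])
    also have "\<dots> = 0" by (simp add: if_distrib[of "\<lambda>x. _ * x"] cong: if_cong)
    finally show "killing (Z0 k) Y' = 0" .
  qed
  ultimately have "Y' = 0" by (rule nondeg)
  then show ?thesis by (simp add: Y'_def)
qed

lemma cond_any:
  assumes "y \<in> n"
  shows "killing (xq Zb0 q) (brk (Z0 k + (\<Sum>l\<in>UNIV. smul (alpha k l q) (X0 l))) y) = 0"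
proof -
  obtain c where c: "y = (\<Sum>l\<in>UNIV. smul (c l) (X0 l))" using basis_span[OF X0_basis assms] by blast
  show ?thesis
    by (simp add: c brk_sum_right brk_smul_right killing_sum_right killing_smul_right alpha_eq)
qed

end

locale anyb = refdata +
  fixes Z :: "5 \<Rightarrow> mat4" and X :: "10 \<Rightarrow> mat4" and Zb :: "5 \<Rightarrow> mat4"
  assumes Zbas: "is_basis Z (centralizer e_nil)" and Xbas: "is_basis X n" and dual: "dual_part Zb Z X"
begin

definition Pm :: "complex^5^5" where
  "Pm = (\<chi> i k. (SOME P. \<forall>i. Z i = (\<Sum>k\<in>UNIV. smul (P i k) (Z0 k))) i k)"
definition Qm :: "complex^5^5" where
  "Qm = (\<chi> k i. (SOME P. \<forall>k. Z0 k = (\<Sum>i\<in>UNIV. smul (P k i) (Z i))) k i)"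

lemma Pm: "Z i = (\<Sum>k\<in>UNIV. smul (Pm $ i $ k) (Z0 k))"
proof -
  have "\<exists>P. \<forall>i. Z i = (\<Sum>k\<in>UNIV. smul (P i k) (Z0 k))"
    by (rule basis_coords[OF Z0_basis]) (rule basis_elem[OF Zbas])
  then have h0: "\<forall>i. Z i = (\<Sum>k\<in>UNIV. smul ((SOME P. \<forall>i. Z i = (\<Sum>k\<in>UNIV. smul (P i k) (Z0 k))) i k) (Z0 k))"
    by (rule someI_ex)
  have eq: "\<And>i k. Pm $ i $ k = (SOME P. \<forall>i. Z i = (\<Sum>k\<in>UNIV. smul (P i k) (Z0 k))) i k"
    unfolding Pm_def by (simp only: vec_lambda_beta)
  show ?thesis unfolding eq by (rule spec[OF h0])
qed

lemma Qm: "Z0 k = (\<Sum>i\<in>UNIV. smul (Qm $ k $ i) (Z i))"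
proof -
  have "\<exists>P. \<forall>k. Z0 k = (\<Sum>i\<in>UNIV. smul (P k i) (Z i))"
    by (rule basis_coords[OF Zbas]) (rule Z0_in)
  then have h0: "\<forall>k. Z0 k = (\<Sum>i\<in>UNIV. smul ((SOME P. \<forall>k. Z0 k = (\<Sum>i\<in>UNIV. smul (P k i) (Z i))) k i) (Z i))"
    by (rule someI_ex)
  have eq: "\<And>i k. Qm $ k $ i = (SOME P. \<forall>k. Z0 k = (\<Sum>i\<in>UNIV. smul (P k i) (Z i))) k i"
    unfolding Qm_def by (simp only: vec_lambda_beta)
  show ?thesis unfolding eq by (rule spec[OF h0])
qed

lemma QP: "Qm ** Pm = mat 1"
proof -
  have eq: "Z0 k = (\<Sum>k'\<in>UNIV. smul ((Qm ** Pm) $ k $ k') (Z0 k'))" for k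
  proof -
    have "Z0 k = (\<Sum>i\<in>UNIV. smul (Qm $ k $ i) (\<Sum>k'\<in>UNIV. smul (Pm $ i $ k') (Z0 k')))"
      by (subst Qm) (simp add: Pm[symmetric])
    also have "\<dots> = (\<Sum>i\<in>UNIV. \<Sum>k'\<in>UNIV. smul (Qm $ k $ i * Pm $ i $ k') (Z0 k'))"
      by (simp add: smul_sum)
    also have "\<dots> = (\<Sum>k'\<in>UNIV. \<Sum>i\<in>UNIV. smul (Qm $ k $ i * Pm $ i $ k') (Z0 k'))"
      by (rule sum.swap)
    also have "\<dots> = (\<Sum>k'\<in>UNIV. smul ((Qm ** Pm) $ k $ k') (Z0 k'))"
      by (simp add: matrix_matrix_mult_def sum_smul)
    finally show ?thesis .
  qed
  have "(Qm ** Pm) $ k $ k' = mat 1 $ k $ k'" for k k'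
  proof -
    have "(\<Sum>j\<in>UNIV. smul ((Qm ** Pm) $ k $ j) (Z0 j)) - (\<Sum>j\<in>UNIV. smul (if j = k then 1 else 0) (Z0 j)) = 0"
      by (simp only: eq[of k, symmetric] smul_delta_sum diff_self)
    then have "(\<Sum>j\<in>UNIV. smul ((Qm ** Pm) $ k $ j - (if j = k then 1 else 0)) (Z0 j)) = 0"
      by (simp only: sum_smul_diff)
    from basis_indep[OF Z0_basis this] show ?thesis by (auto simp: mat_def)
  qed
  then show ?thesis by (simp add: vec_eq_iff)
qed

lemma PQ: "Pm ** Qm = mat 1"
  using QP matrix_left_right_inverse by blast

lemma KZbZ0: "killing (Zb s) (Z0 t) = Qm $ t $ s"
proof -
  have "killing (Zb s) (Z0 t) = (\<Sum>i\<in>UNIV. Qm $ t $ i * killing (Zb s) (Z i))"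
    by (subst Qm) (simp add: killing_sum_right killing_smul_right)
  also have "\<dots> = (\<Sum>i\<in>UNIV. Qm $ t $ i * (if s = i then 1 else 0))"
    using dual by (simp add: dual_part_def)
  also have "\<dots> = Qm $ t $ s" by (simp add: if_distrib[of "\<lambda>x. _ * x"] cong: if_cong)
  finally show ?thesis .
qed

lemma Zb_exp: "Zb s = (\<Sum>t\<in>UNIV. smul (Qm $ t $ s) (Zb0 t))"
proof -
  have "Zb s \<in> sl4" using dual by (simp add: dual_part_def)
  moreover have "killing (Zb s) (X0 l) = 0" for l
  proof -
    obtain c where c: "X0 l = (\<Sum>m\<in>UNIV. smul (c m) (X m))" using basis_span[OF Xbas X0_in] by blast
    show ?thesis using dual by (simp add: c killing_sum_right killing_smul_right dual_part_def)
  qed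
  ultimately show ?thesis using nperp[of "Zb s"] by (simp add: KZbZ0)
qed

lemma xq_eq: "xq Zb q = xq Zb0 (Qm *v q)"
proof -
  have "(\<Sum>s\<in>UNIV. smul (q $ s) (Zb s)) = (\<Sum>s\<in>UNIV. \<Sum>t\<in>UNIV. smul (q $ s * Qm $ t $ s) (Zb0 t))"
    by (simp add: Zb_exp[of s for s] smul_sum)
  also have "\<dots> = (\<Sum>t\<in>UNIV. \<Sum>s\<in>UNIV. smul (q $ s * Qm $ t $ s) (Zb0 t))" by (rule sum.swap)
  also have "\<dots> = (\<Sum>t\<in>UNIV. smul ((Qm *v q) $ t) (Zb0 t))"
    by (simp add: matrix_vector_mult_def sum_smul ac_simps)
  finally show ?thesis by (simp add: xq_def)
qed


lemma Z_in: "Z j \<in> ge" using Zbas by (rule basis_elem)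
lemma X_in: "X m \<in> n" using Xbas by (rule basis_elem)

definition Rm :: "complex^5 \<Rightarrow> complex^5^5" where "Rm q' = (\<chi> k l. R k l q')"

lemma sum_rearr: "(\<Sum>k\<in>UNIV. a k * (\<Sum>l\<in>UNIV. b l * c k l)) = (\<Sum>l\<in>UNIV. (\<Sum>k\<in>UNIV. a k * c k l) * (b l :: complex))"
proof -
  have "(\<Sum>k\<in>UNIV. a k * (\<Sum>l\<in>UNIV. b l * c k l)) = (\<Sum>k\<in>(UNIV::'a set). \<Sum>l\<in>(UNIV::'b set). a k * c k l * b l)"
    by (simp add: sum_distrib_left ac_simps)
  also have "\<dots> = (\<Sum>l\<in>UNIV. \<Sum>k\<in>UNIV. a k * c k l * b l)" by (rule sum.swap)
  also have "\<dots> = (\<Sum>l\<in>UNIV. (\<Sum>k\<in>UNIV. a k * c k l) * b l)" by (simp add: sum_distrib_right)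
  finally show ?thesis .
qed

lemma Lam_formula:
  assumes inv: "invertible (CN Zb X q)"
  shows "LambdaN Zb X Z q = Pm ** Rm (Qm *v q) ** transpose Pm"
proof -
  define q' where "q' = Qm *v q"
  define a0 where "a0 k = (\<Sum>l\<in>UNIV. smul (alpha k l q') (X0 l))" for k
  define ai where "ai i = (\<Sum>k\<in>UNIV. smul (Pm $ i $ k) (a0 k))" for i
  have ai_n: "ai i \<in> n" for i
    unfolding ai_def a0_def
    by (intro csubspace_sum[OF n_csub] csubspace_smul[OF n_csub] basis_mem[OF X0_basis])
  obtain \<beta> where \<beta>: "\<forall>i. ai i = (\<Sum>l\<in>UNIV. smul (\<beta> i l) (X l))"
    using basis_coords[of X n ai] Xbas ai_n by blast
  have ui: "Z i + (\<Sum>l\<in>UNIV. smul (\<beta> i l) (X l)) = (\<Sum>k\<in>UNIV. smul (Pm $ i $ k) (Z0 k + a0 k))" for i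
  proof -
    have "Z i + (\<Sum>l\<in>UNIV. smul (\<beta> i l) (X l)) = Z i + ai i" using \<beta> by simp
    also have "\<dots> = (\<Sum>k\<in>UNIV. smul (Pm $ i $ k) (Z0 k + a0 k))"
      by (subst Pm[of i]) (simp add: ai_def smul_add sum.distrib)
    finally show ?thesis .
  qed
  have cond: "killing (xq Zb q) (brk (Z i + (\<Sum>l\<in>UNIV. smul (\<beta> i l) (X l))) (X m)) = 0" for i m
    unfolding ui xq_eq q'_def[symmetric]
    by (simp add: brk_sum_left brk_smul_left killing_sum_right killing_smul_right a0_def cond_any[OF X_in])
  have "LambdaN Zb X Z q $ i $ j = (Pm ** Rm q' ** transpose Pm) $ i $ j" for i j
  proof -
    have "LambdaN Zb X Z q $ i $ j = killing (xq Zb q) (brk (Z i + (\<Sum>l\<in>UNIV. smul (\<beta> i l) (X l))) (Z j))"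
      by (rule L1[OF Z_in inv cond])
    also have "\<dots> = (\<Sum>l\<in>UNIV. Pm $ j $ l * (\<Sum>k\<in>UNIV. Pm $ i $ k * R k l q'))"
      unfolding ui xq_eq q'_def[symmetric]
      by (subst Pm[of j]) (simp add: brk_sum_left brk_smul_left brk_sum_right brk_smul_right
          killing_sum_right killing_smul_right a0_def R_eq)
    also have "\<dots> = (Pm ** Rm q' ** transpose Pm) $ i $ j"
      by (simp add: matrix_matrix_mult_def transpose_def Rm_def mult.commute)
    finally show ?thesis .
  qed
  then show ?thesis by (simp add: vec_eq_iff q'_def)
qed

abbreviation "S \<equiv> {q. invertible (CN Zb X q)}"

lemma upper: "poly_deg_le_on S (\<lambda>q. LambdaN Zb X Z q $ i $ j) d"
proof -
  have "pdeg (\<lambda>q. \<Sum>l\<in>UNIV. (\<Sum>k\<in>UNIV. Pm $ i $ k * R k l (Qm *v q)) * Pm $ j $ l) d"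
    by (intro pdeg_sum pdeg_mulc pdeg_cmul pdeg_subst R_deg) auto
  then have "poly_deg_le_on S (\<lambda>q. \<Sum>l\<in>UNIV. (\<Sum>k\<in>UNIV. Pm $ i $ k * R k l (Qm *v q)) * Pm $ j $ l) d"
    by (rule pdeg_imp_poly_deg_le)
  then show ?thesis
    by (rule poly_deg_le_cong[rotated]) (simp add: Lam_formula matrix_matrix_mult_def transpose_def Rm_def)
qed

lemma xq0: "xq Zb 0 = e_nil" by (simp add: xq_def)

lemma C0_inv: "invertible (CN Zb X 0)"
proof -
  have "\<forall>\<beta>. CN Zb X 0 *v \<beta> = 0 \<longrightarrow> \<beta> = 0"
  proof (intro allI impI)
    fix \<beta> :: "complex^10" assume h: "CN Zb X 0 *v \<beta> = 0"
    define y where "y = (\<Sum>m\<in>UNIV. smul (\<beta> $ m) (X m))"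
    have y_n: "y \<in> n" unfolding y_def by (rule basis_mem[OF Xbas])
    have ent: "(CN Zb X 0 *v \<beta>) $ l = killing e_nil (brk (X l) y)" for l
      by (simp add: matrix_vector_mult_def CN_entry xq0 y_def brk_sum_right brk_smul_right
          killing_sum_right killing_smul_right ac_simps)
    have Kl: "killing e_nil (brk (X l) y) = 0" for l using h ent[of l] by simp
    have Kw: "killing e_nil (brk w y) = 0" if w: "w \<in> sl4" for w
    proof -
      obtain B C where BC: "B \<in> n" "C \<in> ge" "w = B + C" using decomp w by blast
      obtain b where b: "B = (\<Sum>l\<in>UNIV. smul (b l) (X l))" using basis_span[OF Xbas BC(1)] by blast
      have "killing e_nil (brk C y) = 0"
        using BC(2) by (simp add: killing_invariant centralizer_def)
      then show ?thesis
        by (simp add: BC(3) b brk_add_left brk_sum_left brk_smul_left killing_add_right killing_sum_right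
            killing_smul_right Kl)
    qed
    have "\<forall>w\<in>sl4. killing w (brk e_nil y) = 0"
    proof
      fix w assume "w \<in> sl4"
      have "killing w (brk e_nil y) = killing (brk w e_nil) y" by (rule killing_invariant)
      also have "\<dots> = - killing (brk e_nil w) y"
        by (subst brk_antisym) (simp add: killing_uminus_left)
      also have "\<dots> = - killing e_nil (brk w y)" by (simp add: killing_invariant)
      also have "\<dots> = 0" using Kw \<open>w \<in> sl4\<close> by simp
      finally show "killing w (brk e_nil y) = 0" .
    qed
    then have "brk e_nil y = 0" using nondeg sl4_brk by blast
    then have "y \<in> ge" using y_n n_sl4 by (auto simp: centralizer_def)
    then have "y = 0" using y_n n_cap by blast
    then have "\<beta> $ m = 0" for m using basis_indep[OF Xbas] unfolding y_def by blast
    then show "\<beta> = 0" by (simp add: vec_eq_iff)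
  qed
  then show ?thesis
    using matrix_left_invertible_ker invertible_left_inverse by blast
qed

lemma T_inf: "infinite {t. invertible (CN Zb X (t *s v))}"
proof -
  have ent: "CN Zb X q $ l $ m = killing e_nil (brk (X l) (X m)) + (\<Sum>s\<in>UNIV. killing (Zb s) (brk (X l) (X m)) * q $ s)" for q l m
    by (simp add: CN_def killing_add_left killing_sum_left killing_smul_left mult.commute)
  have "pdeg (\<lambda>q. CN Zb X q $ l $ m) (Suc 0)" for l m
    unfolding ent by (intro pdeg.padd pdeg.pconst pdeg_sum pdeg_cmul pdeg_var) auto
  then obtain N where "pdeg (\<lambda>q. det (CN Zb X q)) N" using pdeg_det by blast
  then obtain p where p: "\<forall>t. det (CN Zb X (t *s v)) = poly p t" using pdeg_line by blast
  have "poly p 0 \<noteq> 0" using p[rule_format, of 0] C0_inv by (simp add: zero_smul_vec invertible_det_nz)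
  then have "p \<noteq> 0" by auto
  then have fin: "finite {t. poly p t = 0}" by (rule poly_roots_finite)
  have "{t. invertible (CN Zb X (t *s v))} = UNIV - {t. poly p t = 0}"
    using p by (auto simp: invertible_det_nz)
  then show ?thesis using Diff_infinite_finite[OF fin infinite_UNIV_char_0] by simp
qed

lemma lower: "\<not> (\<forall>i j. poly_deg_le_on S (\<lambda>q. LambdaN Zb X Z q $ i $ j) (d - 1))"
proof
  assume H: "\<forall>i j. poly_deg_le_on S (\<lambda>q. LambdaN Zb X Z q $ i $ j) (d - 1)"
  have "\<forall>ij. \<exists>g. pdeg g (d - 1) \<and> (\<forall>q\<in>S. LambdaN Zb X Z q $ fst ij $ snd ij = g q)"
    using H poly_deg_le_imp_pdeg by blast
  then obtain g where g: "\<forall>ij. pdeg (g ij) (d - 1) \<and> (\<forall>q\<in>S. LambdaN Zb X Z q $ fst ij $ snd ij = g ij q)"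
    by metis
  obtain k0 l0 w c where top: "c \<noteq> 0" "\<forall>t. R k0 l0 (t *s w) = c * t ^ d" using R_top by blast
  define G where "G q = (Qm ** (\<chi> i j. g (i, j) q) ** transpose Qm) $ k0 $ l0" for q
  have "pdeg (\<lambda>q. \<Sum>j\<in>UNIV. (\<Sum>i\<in>UNIV. Qm $ k0 $ i * g (i, j) q) * Qm $ l0 $ j) (d - 1)"
    using g by (intro pdeg_sum pdeg_mulc pdeg_cmul) auto
  then have Gdeg: "pdeg G (d - 1)"
    unfolding G_def by (simp add: matrix_matrix_mult_def transpose_def)
  have GR: "G q = R k0 l0 (Qm *v q)" if q: "q \<in> S" for q
  proof -
    have "(\<chi> i j. g (i, j) q) = LambdaN Zb X Z q" using g q by (simp add: vec_eq_iff)
    also have "\<dots> = Pm ** Rm (Qm *v q) ** transpose Pm" using q by (simp add: Lam_formula)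
    finally have "G q = (Qm ** (Pm ** Rm (Qm *v q) ** transpose Pm) ** transpose Qm) $ k0 $ l0"
      by (simp add: G_def)
    also have "Qm ** (Pm ** Rm (Qm *v q) ** transpose Pm) ** transpose Qm = (Qm ** Pm) ** Rm (Qm *v q) ** transpose (Qm ** Pm)"
      by (simp add: matrix_mul_assoc matrix_transpose_mul)
    also have "\<dots> = Rm (Qm *v q)" by (simp add: QP transpose_mat)
    finally show ?thesis by (simp add: Rm_def)
  qed
  define v where "v = Pm *v w"
  have Qv: "Qm *v (t *s v) = t *s w" for t
    by (simp add: v_def mv_smul matrix_vector_mul_assoc QP)
  obtain p where p: "degree p \<le> d - 1" "\<forall>t. G (t *s v) = poly p t" using pdeg_line[OF Gdeg] by blast
  have "{t. invertible (CN Zb X (t *s v))} \<subseteq> {t. poly (p - monom c d) t = 0}"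
  proof
    fix t assume "t \<in> {t. invertible (CN Zb X (t *s v))}"
    then have "G (t *s v) = c * t ^ d" using GR[of "t *s v"] Qv top by simp
    then show "t \<in> {t. poly (p - monom c d) t = 0}" using p by (simp add: poly_monom)
  qed
  then have "infinite {t. poly (p - monom c d) t = 0}" using T_inf finite_subset by blast
  then have "p - monom c d = 0" using poly_roots_finite by blast
  then have "p = monom c d" by simp
  then have "degree p = d" using top(1) by (simp add: degree_monom_eq)
  then show False using p(1) d_pos by simp
qed

lemma result: "mat_poly_degree_on S (LambdaN Zb X Z) d"
  unfolding mat_poly_degree_on_def using upper lower by blast

end

context refdata begin

lemma transverse: "transverse_degree TYPE(5) TYPE(10) n d"
  unfolding transverse_degree_def
proof (intro conjI allI impI)
  show "\<exists>(Z::5 \<Rightarrow> mat4) (X::10 \<Rightarrow> mat4) Zb. is_basis Z (centralizer e_nil) \<and> is_basis X n \<and> dual_part Zb Z X"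
    using Z0_basis X0_basis Zb0_dual by blast
next
  fix Z :: "5 \<Rightarrow> mat4" and X :: "10 \<Rightarrow> mat4" and Zb
  assume "is_basis Z (centralizer e_nil)" "is_basis X n" "dual_part Zb Z X"
  then interpret anyb n X0 Z0 Zb0 alpha R d Z X Zb by unfold_locales
  show "mat_poly_degree_on {q. invertible (CN Zb X q)} (LambdaN Zb X Z) d" by (rule result)
qed

end




definition mk :: "complex \<Rightarrow> complex \<Rightarrow> complex \<Rightarrow> complex \<Rightarrow> complex \<Rightarrow> complex \<Rightarrow> complex \<Rightarrow> complex \<Rightarrow> complex \<Rightarrow> complex \<Rightarrow> complex \<Rightarrow> complex \<Rightarrow> complex \<Rightarrow> complex \<Rightarrow> complex \<Rightarrow> complex \<Rightarrow> mat4" where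
  "mk a00 a01 a02 a03 a10 a11 a12 a13 a20 a21 a22 a23 a30 a31 a32 a33 = (\<chi> i j. if i = 0 then (if j = 0 then a00 else if j = 1 then a01 else if j = 2 then a02 else a03) else if i = 1 then (if j = 0 then a10 else if j = 1 then a11 else if j = 2 then a12 else a13) else if i = 2 then (if j = 0 then a20 else if j = 1 then a21 else if j = 2 then a22 else a23) else (if j = 0 then a30 else if j = 1 then a31 else if j = 2 then a32 else a33))"

lemma mk_apply [simp]: "mk a00 a01 a02 a03 a10 a11 a12 a13 a20 a21 a22 a23 a30 a31 a32 a33 $ 0 $ 0 = a00" "mk a00 a01 a02 a03 a10 a11 a12 a13 a20 a21 a22 a23 a30 a31 a32 a33 $ 0 $ 1 = a01" "mk a00 a01 a02 a03 a10 a11 a12 a13 a20 a21 a22 a23 a30 a31 a32 a33 $ 0 $ 2 = a02" "mk a00 a01 a02 a03 a10 a11 a12 a13 a20 a21 a22 a23 a30 a31 a32 a33 $ 0 $ 3 = a03" "mk a00 a01 a02 a03 a10 a11 a12 a13 a20 a21 a22 a23 a30 a31 a32 a33 $ 1 $ 0 = a10" "mk a00 a01 a02 a03 a10 a11 a12 a13 a20 a21 a22 a23 a30 a31 a32 a33 $ 1 $ 1 = a11" "mk a00 a01 a02 a03 a10 a11 a12 a13 a20 a21 a22 a23 a30 a31 a32 a33 $ 1 $ 2 = a12" "mk a00 a01 a02 a03 a10 a11 a12 a13 a20 a21 a22 a23 a30 a31 a32 a33 $ 1 $ 3 = a13" "mk a00 a01 a02 a03 a10 a11 a12 a13 a20 a21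 a22 a23 a30 a31 a32 a33 $ 2 $ 0 = a20" "mk a00 a01 a02 a03 a10 a11 a12 a13 a20 a21 a22 a23 a30 a31 a32 a33 $ 2 $ 1 = a21" "mk a00 a01 a02 a03 a10 a11 a12 a13 a20 a21 a22 a23 a30 a31 a32 a33 $ 2 $ 2 = a22" "mk a00 a01 a02 a03 a10 a11 a12 a13 a20 a21 a22 a23 a30 a31 a32 a33 $ 2 $ 3 = a23" "mk a00 a01 a02 a03 a10 a11 a12 a13 a20 a21 a22 a23 a30 a31 a32 a33 $ 3 $ 0 = a30" "mk a00 a01 a02 a03 a10 a11 a12 a13 a20 a21 a22 a23 a30 a31 a32 a33 $ 3 $ 1 = a31" "mk a00 a01 a02 a03 a10 a11 a12 a13 a20 a21 a22 a23 a30 a31 a32 a33 $ 3 $ 2 = a32" "mk a00 a01 a02 a03 a10 a11 a12 a13 a20 a21 a22 a23 a30 a31 a32 a33 $ 3 $ 3 = a33"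
  by (simp_all add: mk_def)

lemma mk_entries: "(A::mat4) = mk (A $ 0 $ 0) (A $ 0 $ 1) (A $ 0 $ 2) (A $ 0 $ 3) (A $ 1 $ 0) (A $ 1 $ 1) (A $ 1 $ 2) (A $ 1 $ 3) (A $ 2 $ 0) (A $ 2 $ 1) (A $ 2 $ 2) (A $ 2 $ 3) (A $ 3 $ 0) (A $ 3 $ 1) (A $ 3 $ 2) (A $ 3 $ 3)"
  by (simp add: mat_eq_iff forall_4')

lemma mk_eq_iff: "mk a00 a01 a02 a03 a10 a11 a12 a13 a20 a21 a22 a23 a30 a31 a32 a33 = mk b00 b01 b02 b03 b10 b11 b12 b13 b20 b21 b22 b23 b30 b31 b32 b33 \<longleftrightarrow> (a00 = b00 \<and> a01 = b01 \<and> a02 = b02 \<and> a03 = b03 \<and> a10 = b10 \<and> a11 = b11 \<and> a12 = b12 \<and> a13 = b13 \<and> a20 = b20 \<and> a21 = b21 \<and> a22 = b22 \<and> a23 = b23 \<and> a30 = b30 \<and> a31 = b31 \<and> a32 = b32 \<and> a33 = b33)"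
  by (simp add: mat_eq_iff forall_4')

lemma mk_add: "mk a00 a01 a02 a03 a10 a11 a12 a13 a20 a21 a22 a23 a30 a31 a32 a33 + mk b00 b01 b02 b03 b10 b11 b12 b13 b20 b21 b22 b23 b30 b31 b32 b33 = mk (a00 + b00) (a01 + b01) (a02 + b02) (a03 + b03) (a10 + b10) (a11 + b11) (a12 + b12) (a13 + b13) (a20 + b20) (a21 + b21) (a22 + b22) (a23 + b23) (a30 + b30) (a31 + b31) (a32 + b32) (a33 + b33)"
  by (simp add: mat_eq_iff forall_4')
lemma mk_diff: "mk a00 a01 a02 a03 a10 a11 a12 a13 a20 a21 a22 a23 a30 a31 a32 a33 - mk b00 b01 b02 b03 b10 b11 b12 b13 b20 b21 b22 b23 b30 b31 b32 b33 = mk (a00 - b00) (a01 - b01) (a02 - b02) (a03 - b03) (a10 - b10) (a11 - b11) (a12 - b12) (a13 - b13) (a20 - b20) (a21 - b21) (a22 - b22) (a23 - b23) (a30 - b30) (a31 - b31) (a32 - b32) (a33 - b33)"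
  by (simp add: mat_eq_iff forall_4')
lemma mk_uminus: "- mk a00 a01 a02 a03 a10 a11 a12 a13 a20 a21 a22 a23 a30 a31 a32 a33 = mk (- a00) (- a01) (- a02) (- a03) (- a10) (- a11) (- a12) (- a13) (- a20) (- a21) (- a22) (- a23) (- a30) (- a31) (- a32) (- a33)"
  by (simp add: mat_eq_iff forall_4')
lemma smul_mk: "smul c (mk a00 a01 a02 a03 a10 a11 a12 a13 a20 a21 a22 a23 a30 a31 a32 a33) = mk (c * a00) (c * a01) (c * a02) (c * a03) (c * a10) (c * a11) (c * a12) (c * a13) (c * a20) (c * a21) (c * a22) (c * a23) (c * a30) (c * a31) (c * a32) (c * a33)"
  by (simp add: mat_eq_iff forall_4')
lemma zero_mk: "(0::mat4) = mk (0) (0) (0) (0) (0) (0) (0) (0) (0) (0) (0) (0) (0) (0) (0) (0)"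
  by (simp add: mat_eq_iff forall_4')
lemma mm_mk: "mk a00 a01 a02 a03 a10 a11 a12 a13 a20 a21 a22 a23 a30 a31 a32 a33 ** mk b00 b01 b02 b03 b10 b11 b12 b13 b20 b21 b22 b23 b30 b31 b32 b33 = mk (a00 * b00 + a01 * b10 + a02 * b20 + a03 * b30) (a00 * b01 + a01 * b11 + a02 * b21 + a03 * b31) (a00 * b02 + a01 * b12 + a02 * b22 + a03 * b32) (a00 * b03 + a01 * b13 + a02 * b23 + a03 * b33) (a10 * b00 + a11 * b10 + a12 * b20 + a13 * b30) (a10 * b01 + a11 * b11 + a12 * b21 + a13 * b31) (a10 * b02 + a11 * b12 + a12 * b22 + a13 * b32) (a10 * b03 + a11 * b13 + a12 * b23 + a13 * b33) (a20 * b00 + a21 * b10 + a22 * b20 + a23 * b30) (a20 * b01 + a21 * b11 + a22 * b21 + a23 * b31) (a20 * b02 + a21 * b12 + a22 * b22 + a23 * b32) (a20 * b03 + a21 * b13 + a22 * b23 + a23 * b33) (a30 * b00 + a31 * b10 + a32 * b20 + a33 * b30) (a30 * b01 + a31 * b11 + a32 * b21 + a33 * b31) (a30 * b02 + a31 * b12 + a32 * b22 + a33 * b32) (a30 * b03 + a31 * b13 + a32 * b23 + a33 * b33)"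
  by (simp add: mat_eq_iff forall_4' mm_entry sum_4')
lemma brk_mk: "brk (mk a00 a01 a02 a03 a10 a11 a12 a13 a20 a21 a22 a23 a30 a31 a32 a33) (mk b00 b01 b02 b03 b10 b11 b12 b13 b20 b21 b22 b23 b30 b31 b32 b33) = mk (a00 * b00 + a01 * b10 + a02 * b20 + a03 * b30 - (b00 * a00 + b01 * a10 + b02 * a20 + b03 * a30)) (a00 * b01 + a01 * b11 + a02 * b21 + a03 * b31 - (b00 * a01 + b01 * a11 + b02 * a21 + b03 * a31)) (a00 * b02 + a01 * b12 + a02 * b22 + a03 * b32 - (b00 * a02 + b01 * a12 + b02 * a22 + b03 * a32)) (a00 * b03 + a01 * b13 + a02 * b23 + a03 * b33 - (b00 * a03 + b01 * a13 + b02 * a23 + b03 * a33)) (a10 * b00 + a11 * b10 + a12 * b20 + a13 * b30 - (b10 * a00 + b11 * a10 + b12 * a20 + b13 * a30)) (a10 * b01 + a11 * b11 + a12 * b21 + a13 * b31 - (b10 * a01 + b11 * a11 + b12 * a21 + b13 * a31)) (a10 * b02 + a11 * b12 + a12 * b22 + a13 * b32 - (b10 * a02 + b11 * a12 + b12 * a22 + b13 * a32)) (a10 * b03 + a11 * b13 + a12 * b23 + a13 * b33 - (b10 * a03 + b11 * a13 + b12 * a23 + b13 * a33)) (a20 * b00 + a21 * b10 + a22 * b20 + a23 * b30 - (b20 * a00 + b21 * a10 + b22 * a20 + b23 * a30)) (a20 * b01 + a21 * b11 + a22 * b21 + a23 * b31 - (b20 * a01 + b21 * a11 + b22 * a21 +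 b23 * a31)) (a20 * b02 + a21 * b12 + a22 * b22 + a23 * b32 - (b20 * a02 + b21 * a12 + b22 * a22 + b23 * a32)) (a20 * b03 + a21 * b13 + a22 * b23 + a23 * b33 - (b20 * a03 + b21 * a13 + b22 * a23 + b23 * a33)) (a30 * b00 + a31 * b10 + a32 * b20 + a33 * b30 - (b30 * a00 + b31 * a10 + b32 * a20 + b33 * a30)) (a30 * b01 + a31 * b11 + a32 * b21 + a33 * b31 - (b30 * a01 + b31 * a11 + b32 * a21 + b33 * a31)) (a30 * b02 + a31 * b12 + a32 * b22 + a33 * b32 - (b30 * a02 + b31 * a12 + b32 * a22 + b33 * a32)) (a30 * b03 + a31 * b13 + a32 * b23 + a33 * b33 - (b30 * a03 + b31 * a13 + b32 * a23 + b33 * a33))"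
  by (simp add: brk_def mm_mk mk_diff)
lemma trace_mk: "trace (mk a00 a01 a02 a03 a10 a11 a12 a13 a20 a21 a22 a23 a30 a31 a32 a33) = a00 + a11 + a22 + a33"
  by (simp add: trace_def sum_4')
lemma killing_mk: "killing (mk a00 a01 a02 a03 a10 a11 a12 a13 a20 a21 a22 a23 a30 a31 a32 a33) (mk b00 b01 b02 b03 b10 b11 b12 b13 b20 b21 b22 b23 b30 b31 b32 b33) = 8 * (a00 * b00 + a01 * b10 + a02 * b20 + a03 * b30 + a10 * b01 + a11 * b11 + a12 * b21 + a13 * b31 + a20 * b02 + a21 * b12 + a22 * b22 + a23 * b32 + a30 * b03 + a31 * b13 + a32 * b23 + a33 * b33) - 2 * (a00 + a11 + a22 + a33) * (b00 + b11 + b22 + b33)"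
  by (simp add: killing_formula mm_mk trace_mk)

lemma Em_00: "Em 0 0 = mk (1) (0) (0) (0) (0) (0) (0) (0) (0) (0) (0) (0) (0) (0) (0) (0)"
  by (simp add: mat_eq_iff forall_4' Em_def)
lemma Em_01: "Em 0 1 = mk (0) (1) (0) (0) (0) (0) (0) (0) (0) (0) (0) (0) (0) (0) (0) (0)"
  by (simp add: mat_eq_iff forall_4' Em_def)
lemma Em_02: "Em 0 2 = mk (0) (0) (1) (0) (0) (0) (0) (0) (0) (0) (0) (0) (0) (0) (0) (0)"
  by (simp add: mat_eq_iff forall_4' Em_def)
lemma Em_03: "Em 0 3 = mk (0) (0) (0) (1) (0) (0) (0) (0) (0) (0) (0) (0) (0) (0) (0) (0)"
  by (simp add: mat_eq_iff forall_4' Em_def)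
lemma Em_10: "Em 1 0 = mk (0) (0) (0) (0) (1) (0) (0) (0) (0) (0) (0) (0) (0) (0) (0) (0)"
  by (simp add: mat_eq_iff forall_4' Em_def)
lemma Em_11: "Em 1 1 = mk (0) (0) (0) (0) (0) (1) (0) (0) (0) (0) (0) (0) (0) (0) (0) (0)"
  by (simp add: mat_eq_iff forall_4' Em_def)
lemma Em_12: "Em 1 2 = mk (0) (0) (0) (0) (0) (0) (1) (0) (0) (0) (0) (0) (0) (0) (0) (0)"
  by (simp add: mat_eq_iff forall_4' Em_def)
lemma Em_13: "Em 1 3 = mk (0) (0) (0) (0) (0) (0) (0) (1) (0) (0) (0) (0) (0) (0) (0) (0)"
  by (simp add: mat_eq_iff forall_4' Em_def)
lemma Em_20: "Em 2 0 = mk (0) (0) (0) (0) (0) (0) (0) (0) (1) (0) (0) (0) (0) (0) (0) (0)"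
  by (simp add: mat_eq_iff forall_4' Em_def)
lemma Em_21: "Em 2 1 = mk (0) (0) (0) (0) (0) (0) (0) (0) (0) (1) (0) (0) (0) (0) (0) (0)"
  by (simp add: mat_eq_iff forall_4' Em_def)
lemma Em_22: "Em 2 2 = mk (0) (0) (0) (0) (0) (0) (0) (0) (0) (0) (1) (0) (0) (0) (0) (0)"
  by (simp add: mat_eq_iff forall_4' Em_def)
lemma Em_23: "Em 2 3 = mk (0) (0) (0) (0) (0) (0) (0) (0) (0) (0) (0) (1) (0) (0) (0) (0)"
  by (simp add: mat_eq_iff forall_4' Em_def)
lemma Em_30: "Em 3 0 = mk (0) (0) (0) (0) (0) (0) (0) (0) (0) (0) (0) (0) (1) (0) (0) (0)"
  by (simp add: mat_eq_iff forall_4' Em_def)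
lemma Em_31: "Em 3 1 = mk (0) (0) (0) (0) (0) (0) (0) (0) (0) (0) (0) (0) (0) (1) (0) (0)"
  by (simp add: mat_eq_iff forall_4' Em_def)
lemma Em_32: "Em 3 2 = mk (0) (0) (0) (0) (0) (0) (0) (0) (0) (0) (0) (0) (0) (0) (1) (0)"
  by (simp add: mat_eq_iff forall_4' Em_def)
lemma Em_33: "Em 3 3 = mk (0) (0) (0) (0) (0) (0) (0) (0) (0) (0) (0) (0) (0) (0) (0) (1)"
  by (simp add: mat_eq_iff forall_4' Em_def)
lemmas Em_mk = Em_00 Em_01 Em_02 Em_03 Em_10 Em_11 Em_12 Em_13 Em_20 Em_21 Em_22 Em_23 Em_30 Em_31 Em_32 Em_33

definition Z0c :: "5 \<Rightarrow> mat4" where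
  "Z0c k = (if k = 0 then Em 0 2 else if k = 1 then Em 0 3 else if k = 2 then e_nil else if k = 3 then Em 2 3 else Em 0 0 + Em 1 1 - smul 3 (Em 2 2) + Em 3 3)"
lemma e_mk: "e_nil = mk (0) ((1)) (0) (0) (0) (0) (0) ((1)) (0) (0) (0) (0) (0) (0) (0) (0)"
  by (simp add: e_nil_def Em_mk mk_add)
lemma Z0c_0: "Z0c 0 = mk (0) (0) ((1)) (0) (0) (0) (0) (0) (0) (0) (0) (0) (0) (0) (0) (0)"
  by (simp add: Z0c_def Em_mk mk_add mk_diff smul_mk e_mk)
lemma Z0c_1: "Z0c 1 = mk (0) (0) (0) ((1)) (0) (0) (0) (0) (0) (0) (0) (0) (0) (0) (0) (0)"
  by (simp add: Z0c_def Em_mk mk_add mk_diff smul_mk e_mk)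
lemma Z0c_2: "Z0c 2 = mk (0) ((1)) (0) (0) (0) (0) (0) ((1)) (0) (0) (0) (0) (0) (0) (0) (0)"
  by (simp add: Z0c_def Em_mk mk_add mk_diff smul_mk e_mk)
lemma Z0c_3: "Z0c 3 = mk (0) (0) (0) (0) (0) (0) (0) (0) (0) (0) (0) ((1)) (0) (0) (0) (0)"
  by (simp add: Z0c_def Em_mk mk_add mk_diff smul_mk e_mk)
lemma Z0c_4: "Z0c 4 = mk ((1)) (0) (0) (0) (0) ((1)) (0) (0) (0) (0) ((- 3)) (0) (0) (0) (0) ((1))"
  by (simp add: Z0c_def Em_mk mk_add mk_diff smul_mk e_mk)
lemmas Z0c_mk = Z0c_0 Z0c_1 Z0c_2 Z0c_3 Z0c_4
lemma sum_lt10: "(\<Sum>i<(10::nat). f i) = f 0 + f 1 + f 2 + f 3 + f 4 + f 5 + f 6 + f 7 + f 8 + (f 9 :: mat4)"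
  by (simp add: eval_nat_numeral)

lemma mk_surj: "\<exists>a00 a01 a02 a03 a10 a11 a12 a13 a20 a21 a22 a23 a30 a31 a32 a33. (A::mat4) = mk a00 a01 a02 a03 a10 a11 a12 a13 a20 a21 a22 a23 a30 a31 a32 a33"
  by (rule exI)+ (rule mk_entries)

definition idx10 :: "10 \<Rightarrow> nat" where
  "idx10 i = (if i = 0 then 0 else if i = 1 then 1 else if i = 2 then 2 else if i = 3 then 3 else if i = 4 then 4 else if i = 5 then 5 else if i = 6 then 6 else if i = 7 then 7 else if i = 8 then 8 else 9)"

lemma basis_Z0c: "is_basis Z0c (centralizer e_nil)"
  unfolding is_basis_def
proof (intro conjI allI impI)
  fix c :: "5 \<Rightarrow> complex" and i :: 5 assume "(\<Sum>i\<in>UNIV. smul (c i) (Z0c i)) = 0"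
  then have "\<forall>i. c i = 0" by (simp add: sum_5 Z0c_mk smul_mk mk_add zero_mk mk_eq_iff forall_5)
  then show "c i = 0" by blast
next
  show "centralizer e_nil = {A. \<exists>c. A = (\<Sum>i\<in>UNIV. smul (c i) (Z0c i))}"
  proof (intro set_eqI iffI)
    fix A assume "A \<in> centralizer e_nil"
    then have h: "trace A = 0" "brk e_nil A = 0" by (auto simp: centralizer_def sl4_def)
    show "A \<in> {A. \<exists>c. A = (\<Sum>i\<in>UNIV. smul (c i) (Z0c i))}"
    proof -
      obtain a00 a01 a02 a03 a10 a11 a12 a13 a20 a21 a22 a23 a30 a31 a32 a33 where
        A: "A = mk a00 a01 a02 a03 a10 a11 a12 a13 a20 a21 a22 a23 a30 a31 a32 a33" using mk_surj[of A] by (elim exE) (erule that)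
      define cc where "cc = (\<lambda>i::5. if i = 0 then a02 else if i = 1 then a03 else if i = 2 then a01 else if i = 3 then a23 else a00)"
      have "A = (\<Sum>i\<in>UNIV. smul (cc i) (Z0c i))"
        using h unfolding A
        by (simp add: cc_def sum_5 Z0c_mk smul_mk mk_add zero_mk mk_eq_iff e_mk brk_mk trace_mk) algebra
      then show ?thesis by blast
    qed
  next
    fix A assume "A \<in> {A. \<exists>c. A = (\<Sum>i\<in>UNIV. smul (c i) (Z0c i))}"
    then obtain c where "A = (\<Sum>i\<in>UNIV. smul (c i) (Z0c i))" by blast
    then show "A \<in> centralizer e_nil"
      by (simp add: centralizer_def sl4_def sum_5 Z0c_mk smul_mk mk_add zero_mk mk_eq_iff e_mk brk_mk trace_mk)
  qed
qed


lemma csub_span: "csubspace {A. \<exists>c. A = (\<Sum>i\<in>UNIV. smul (c i) ((B::'i::finite \<Rightarrow> mat4) i))}"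
  unfolding csubspace_def
proof (intro conjI ballI allI)
  show "(0::mat4) \<in> {A. \<exists>c. A = (\<Sum>i\<in>UNIV. smul (c i) (B i))}"
    by (intro CollectI exI[of _ "\<lambda>i. 0"]) simp
next
  fix X Y assume "X \<in> {A. \<exists>c. A = (\<Sum>i\<in>UNIV. smul (c i) (B i))}" "Y \<in> {A. \<exists>c. A = (\<Sum>i\<in>UNIV. smul (c i) (B i))}"
  then obtain c d where "X = (\<Sum>i\<in>UNIV. smul (c i) (B i))" "Y = (\<Sum>i\<in>UNIV. smul (d i) (B i))" by blast
  then have "X + Y = (\<Sum>i\<in>UNIV. smul ((\<lambda>i. c i + d i) i) (B i))" by (simp add: smul_add_left sum.distrib)
  then show "X + Y \<in> {A. \<exists>c. A = (\<Sum>i\<in>UNIV. smul (c i) (B i))}"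
    by (intro CollectI exI[of _ "\<lambda>i. c i + d i"]) (simp only:)
next
  fix k X assume "X \<in> {A. \<exists>c. A = (\<Sum>i\<in>UNIV. smul (c i) (B i))}"
  then obtain c where "X = (\<Sum>i\<in>UNIV. smul (c i) (B i))" by blast
  then have "smul k X = (\<Sum>i\<in>UNIV. smul ((\<lambda>i. k * c i) i) (B i))" by (simp add: smul_sum)
  then show "smul k X \<in> {A. \<exists>c. A = (\<Sum>i\<in>UNIV. smul (c i) (B i))}"
    by (intro CollectI exI[of _ "\<lambda>i. k * c i"]) (simp only:)
qed

lemma span_sl4: "(\<And>i. B i \<in> sl4) \<Longrightarrow> {A. \<exists>c. A = (\<Sum>i\<in>UNIV. smul (c i) ((B::'i::finite \<Rightarrow> mat4) i))} \<subseteq> sl4"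
  by (auto intro!: sl4_sum sl4_smul)

lemma pdeg_mv': "pdeg f (d - 1) \<Longrightarrow> 0 < d \<Longrightarrow> pdeg (\<lambda>q. q $ i * f q) d"
  using pdeg.pvar[of f "d - 1" i] by simp

lemma h_mk: "h_plus = mk ((2)) (0) (0) (0) (0) (0) (0) (0) (0) (0) (0) (0) (0) (0) (0) ((- 2))"
  by (simp add: h_plus_def Hr_def Em_mk mk_diff smul_mk mk_add)

definition X0A :: "10 \<Rightarrow> mat4" where
  "X0A l = (if l = 0 then H_a1 else (if l = 1 then H_a23 else (if l = 2 then X_a1 else (if l = 3 then X_a2 else (if l = 4 then X_ma2 else (if l = 5 then X_ma1 else (if l = 6 then X_ma3 else (if l = 7 then X_ma12 else (if l = 8 then X_ma23 else X_ma123)))))))))"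
lemma X0A_0: "X0A 0 = mk ((1)) (0) (0) (0) (0) ((- 1)) (0) (0) (0) (0) (0) (0) (0) (0) (0) (0)"
  by (simp add: X0A_def Hr_def Em_mk mk_diff)
lemma X0A_1: "X0A 1 = mk (0) (0) (0) (0) (0) ((1)) (0) (0) (0) (0) (0) (0) (0) (0) (0) ((- 1))"
  by (simp add: X0A_def Hr_def Em_mk mk_diff)
lemma X0A_2: "X0A 2 = mk (0) ((1)) (0) (0) (0) (0) (0) (0) (0) (0) (0) (0) (0) (0) (0) (0)"
  by (simp add: X0A_def Hr_def Em_mk mk_diff)
lemma X0A_3: "X0A 3 = mk (0) (0) (0) (0) (0) (0) ((1)) (0) (0) (0) (0) (0) (0) (0) (0) (0)"
  by (simp add: X0A_def Hr_def Em_mk mk_diff)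
lemma X0A_4: "X0A 4 = mk (0) (0) (0) (0) (0) (0) (0) (0) (0) ((1)) (0) (0) (0) (0) (0) (0)"
  by (simp add: X0A_def Hr_def Em_mk mk_diff)
lemma X0A_5: "X0A 5 = mk (0) (0) (0) (0) ((1)) (0) (0) (0) (0) (0) (0) (0) (0) (0) (0) (0)"
  by (simp add: X0A_def Hr_def Em_mk mk_diff)
lemma X0A_6: "X0A 6 = mk (0) (0) (0) (0) (0) (0) (0) (0) (0) (0) (0) (0) (0) (0) ((1)) (0)"
  by (simp add: X0A_def Hr_def Em_mk mk_diff)
lemma X0A_7: "X0A 7 = mk (0) (0) (0) (0) (0) (0) (0) (0) ((1)) (0) (0) (0) (0) (0) (0) (0)"
  by (simp add: X0A_def Hr_def Em_mk mk_diff)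
lemma X0A_8: "X0A 8 = mk (0) (0) (0) (0) (0) (0) (0) (0) (0) (0) (0) (0) (0) ((1)) (0) (0)"
  by (simp add: X0A_def Hr_def Em_mk mk_diff)
lemma X0A_9: "X0A 9 = mk (0) (0) (0) (0) (0) (0) (0) (0) (0) (0) (0) (0) ((1)) (0) (0) (0)"
  by (simp add: X0A_def Hr_def Em_mk mk_diff)
lemmas X0A_mk = X0A_0 X0A_1 X0A_2 X0A_3 X0A_4 X0A_5 X0A_6 X0A_7 X0A_8 X0A_9
definition Zb0A :: "5 \<Rightarrow> mat4" where
  "Zb0A s = (if s = 0 then mk (0) (0) (0) (0) (0) (0) (0) (0) ((1/8)) (0) (0) (0) (0) (0) (0) (0) else (if s = 1 then mk (0) (0) (0) (0) (0) (0) (0) (0) (0) (0) (0) (0) ((1/8)) (0) (0) (0) else (if s = 2 then mk (0) (0) (0) (0) (0) (0) (0) (0) (0) (0) (0) (0) (0) ((1/8)) (0) (0) else (if s = 3 then mk (0) (0) (0) (0) (0) (0) (0) (0) (0) (0) (0) (0) (0) (0) ((1/8)) (0) else mk ((1/96)) (0) (0) (0) (0) ((1/96)) (0) (0) (0) (0) ((- 1/32)) (0) (0) (0) (0) ((1/96))))))"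
lemma Zb0A_0: "Zb0A 0 = mk (0) (0) (0) (0) (0) (0) (0) (0) ((1/8)) (0) (0) (0) (0) (0) (0) (0)"
  by (simp add: Zb0A_def)
lemma Zb0A_1: "Zb0A 1 = mk (0) (0) (0) (0) (0) (0) (0) (0) (0) (0) (0) (0) ((1/8)) (0) (0) (0)"
  by (simp add: Zb0A_def)
lemma Zb0A_2: "Zb0A 2 = mk (0) (0) (0) (0) (0) (0) (0) (0) (0) (0) (0) (0) (0) ((1/8)) (0) (0)"
  by (simp add: Zb0A_def)
lemma Zb0A_3: "Zb0A 3 = mk (0) (0) (0) (0) (0) (0) (0) (0) (0) (0) (0) (0) (0) (0) ((1/8)) (0)"
  by (simp add: Zb0A_def)
lemma Zb0A_4: "Zb0A 4 = mk ((1/96)) (0) (0) (0) (0) ((1/96)) (0) (0) (0) (0) ((- 1/32)) (0) (0) (0) (0) ((1/96))"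
  by (simp add: Zb0A_def)
lemmas Zb0A_mk = Zb0A_0 Zb0A_1 Zb0A_2 Zb0A_3 Zb0A_4
lemma xqA: "xq Zb0A q = mk ((1/96) * q $ 4) ((1)) (0) (0) (0) ((1/96) * q $ 4) (0) ((1)) ((1/8) * q $ 0) (0) ((- 1/32) * q $ 4) (0) ((1/8) * q $ 1) ((1/8) * q $ 2) ((1/8) * q $ 3) ((1/96) * q $ 4)"
  by (simp add: xq_def sum_5 Zb0A_mk e_mk smul_mk mk_add mk_eq_iff)
definition alphaA :: "5 \<Rightarrow> 10 \<Rightarrow> complex^5 \<Rightarrow> complex" where
  "alphaA k l q = (if k = 0 then (if l = 0 then (0) else (if l = 1 then (0) else (if l = 2 then (0) else (if l = 3 then ((- 1/24) * q $ 4) else (if l = 4 then (0) else (if l = 5 then ((1/12) * q $ 0) else (if l = 6 then ((1/576) * q $ 4 * q $ 4) else (if l = 7 then (0) else (if l = 8 then ((1/24) * q $ 0) else ((- 1/192) * q $ 0 * q $ 4)))))))))) else (if k = 1 then (if l = 0 then ((- 1/12) * q $ 2) else (if l = 1 then ((- 1/24) * q $ 2) else (if l = 2 then (0) else (if l = 3 then ((1/8) * q $ 3) else (if l = 4 then ((1/8) * q $ 0) else (if l = 5 then ((1/8) * q $ 1) else (if l = 6 then ((- 1/192) * q $ 3 * q $ 4) else (if l = 7 then ((- 1/192) * q $ 0 * q $ 4) else (if l = 8 then ((1/8) * q $ 1) else ((1/64) * q $ 0 * q $ 3)))))))))) else (if k = 2 then (if l = 0 then (0) else (if l = 1 then (0)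 else (if l = 2 then (0) else (if l = 3 then (0) else (if l = 4 then (0) else (if l = 5 then (0) else (if l = 6 then ((1/8) * q $ 3) else (if l = 7 then ((1/8) * q $ 0) else (if l = 8 then ((1/8) * q $ 2) else ((1/8) * q $ 1)))))))))) else (if k = 3 then (if l = 0 then (0) else (if l = 1 then (0) else (if l = 2 then (0) else (if l = 3 then (0) else (if l = 4 then ((- 1/24) * q $ 4) else (if l = 5 then ((1/24) * q $ 3) else (if l = 6 then (0) else (if l = 7 then ((1/576) * q $ 4 * q $ 4 + (- 1/8) * q $ 2) else (if l = 8 then ((1/12) * q $ 3) else (0)))))))))) else (if l = 0 then (0) else (if l = 1 then (0) else (if l = 2 then (0) else (if l = 3 then (0) else (if l = 4 then (0) else (if l = 5 then (0) else (if l = 6 then (0) else (if l = 7 then (0) else (if l = 8 then (0) else (0))))))))))))))"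
lemma UA_0: "Z0c 0 + (\<Sum>l\<in>UNIV. smul (alphaA 0 l q) (X0A l)) = mk (0) (0) ((1)) (0) ((1/12) * q $ 0) (0) ((- 1/24) * q $ 4) (0) (0) (0) (0) (0) ((- 1/192) * q $ 0 * q $ 4) ((1/24) * q $ 0) ((1/576) * q $ 4 * q $ 4) (0)"
  by (simp add: sum_10 alphaA_def X0A_mk Z0c_mk smul_mk mk_add mk_eq_iff)
lemma UA_1: "Z0c 1 + (\<Sum>l\<in>UNIV. smul (alphaA 1 l q) (X0A l)) = mk ((- 1/12) * q $ 2) (0) (0) ((1)) ((1/8) * q $ 1) ((1/24) * q $ 2) ((1/8) * q $ 3) (0) ((- 1/192) * q $ 0 * q $ 4) ((1/8) * q $ 0) (0) (0) ((1/64) * q $ 0 * q $ 3) ((1/8) * q $ 1) ((- 1/192) * q $ 3 * q $ 4) ((1/24) * q $ 2)"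
  by (simp add: sum_10 alphaA_def X0A_mk Z0c_mk smul_mk mk_add mk_eq_iff)
lemma UA_2: "Z0c 2 + (\<Sum>l\<in>UNIV. smul (alphaA 2 l q) (X0A l)) = mk (0) ((1)) (0) (0) (0) (0) (0) ((1)) ((1/8) * q $ 0) (0) (0) (0) ((1/8) * q $ 1) ((1/8) * q $ 2) ((1/8) * q $ 3) (0)"
  by (simp add: sum_10 alphaA_def X0A_mk Z0c_mk smul_mk mk_add mk_eq_iff)
lemma UA_3: "Z0c 3 + (\<Sum>l\<in>UNIV. smul (alphaA 3 l q) (X0A l)) = mk (0) (0) (0) (0) ((1/24) * q $ 3) (0) (0) (0) ((1/576) * q $ 4 * q $ 4 + (- 1/8) * q $ 2) ((- 1/24) * q $ 4) (0) ((1)) (0) ((1/12) * q $ 3) (0) (0)"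
  by (simp add: sum_10 alphaA_def X0A_mk Z0c_mk smul_mk mk_add mk_eq_iff)
lemma UA_4: "Z0c 4 + (\<Sum>l\<in>UNIV. smul (alphaA 4 l q) (X0A l)) = mk ((1)) (0) (0) (0) (0) ((1)) (0) (0) (0) (0) ((- 3)) (0) (0) (0) (0) ((1))"
  by (simp add: sum_10 alphaA_def X0A_mk Z0c_mk smul_mk mk_add mk_eq_iff)
lemmas UA_mk = UA_0 UA_1 UA_2 UA_3 UA_4
definition RA :: "5 \<Rightarrow> 5 \<Rightarrow> complex^5 \<Rightarrow> complex" where
  "RA k l q = (if k = 0 then (if l = 0 then (0) else (if l = 1 then ((- 1/576) * (q $ 0 * (q $ 4 * (q $ 4 * 1))) + (1/12) * (q $ 0 * (q $ 2 * 1))) else (if l = 2 then ((1/24) * (q $ 0 * (q $ 4 * 1))) else (if l = 3 then ((1/1728) * (q $ 4 * (q $ 4 * (q $ 4 * 1))) + (- 1/24) * (q $ 2 * (q $ 4 * 1)) + (1) * (q $ 1 * 1)) else ((- 4) * (q $ 0 * 1)))))) else (if k = 1 then (if l = 0 then ((1/576) * (q $ 0 * (q $ 4 * (q $ 4 * 1))) + (- 1/12) * (q $ 0 * (q $ 2 * 1))) else (if l = 1 then (0) else (if l = 2 then (0) else (if l = 3 then ((- 1/576) * (q $ 3 * (q $ 4 * (q $ 4 * 1))) + (1/12) * (q $ 2 * (q $ 3 * 1))) else (0))))) else (if k = 2 then (if l = 0 then ((- 1/24) * (q $ 0 * (q $ 4 * 1))) else (if l = 1 then (0) else (if l = 2 then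 (0) else (if l = 3 then ((1/24) * (q $ 3 * (q $ 4 * 1))) else (0))))) else (if k = 3 then (if l = 0 then ((- 1/1728) * (q $ 4 * (q $ 4 * (q $ 4 * 1))) + (1/24) * (q $ 2 * (q $ 4 * 1)) + (- 1) * (q $ 1 * 1)) else (if l = 1 then ((1/576) * (q $ 3 * (q $ 4 * (q $ 4 * 1))) + (- 1/12) * (q $ 2 * (q $ 3 * 1))) else (if l = 2 then ((- 1/24) * (q $ 3 * (q $ 4 * 1))) else (if l = 3 then (0) else ((4) * (q $ 3 * 1)))))) else (if l = 0 then ((4) * (q $ 0 * 1)) else (if l = 1 then (0) else (if l = 2 then (0) else (if l = 3 then ((- 4) * (q $ 3 * 1)) else (0)))))))))"
lemma RA_00: "RA 0 0 = (\<lambda>q. 0)"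
  by (simp add: RA_def fun_eq_iff)
lemma RA_01: "RA 0 1 = (\<lambda>q. (- 1/576) * (q $ 0 * (q $ 4 * (q $ 4 * 1))) + (1/12) * (q $ 0 * (q $ 2 * 1)))"
  by (simp add: RA_def fun_eq_iff)
lemma RA_02: "RA 0 2 = (\<lambda>q. (1/24) * (q $ 0 * (q $ 4 * 1)))"
  by (simp add: RA_def fun_eq_iff)
lemma RA_03: "RA 0 3 = (\<lambda>q. (1/1728) * (q $ 4 * (q $ 4 * (q $ 4 * 1))) + (- 1/24) * (q $ 2 * (q $ 4 * 1)) + (1) * (q $ 1 * 1))"
  by (simp add: RA_def fun_eq_iff)
lemma RA_04: "RA 0 4 = (\<lambda>q. (- 4) * (q $ 0 * 1))"
  by (simp add: RA_def fun_eq_iff)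
lemma RA_10: "RA 1 0 = (\<lambda>q. (1/576) * (q $ 0 * (q $ 4 * (q $ 4 * 1))) + (- 1/12) * (q $ 0 * (q $ 2 * 1)))"
  by (simp add: RA_def fun_eq_iff)
lemma RA_11: "RA 1 1 = (\<lambda>q. 0)"
  by (simp add: RA_def fun_eq_iff)
lemma RA_12: "RA 1 2 = (\<lambda>q. 0)"
  by (simp add: RA_def fun_eq_iff)
lemma RA_13: "RA 1 3 = (\<lambda>q. (- 1/576) * (q $ 3 * (q $ 4 * (q $ 4 * 1))) + (1/12) * (q $ 2 * (q $ 3 * 1)))"
  by (simp add: RA_def fun_eq_iff)
lemma RA_14: "RA 1 4 = (\<lambda>q. 0)"
  by (simp add: RA_def fun_eq_iff)
lemma RA_20: "RA 2 0 = (\<lambda>q. (- 1/24) * (q $ 0 * (q $ 4 * 1)))"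
  by (simp add: RA_def fun_eq_iff)
lemma RA_21: "RA 2 1 = (\<lambda>q. 0)"
  by (simp add: RA_def fun_eq_iff)
lemma RA_22: "RA 2 2 = (\<lambda>q. 0)"
  by (simp add: RA_def fun_eq_iff)
lemma RA_23: "RA 2 3 = (\<lambda>q. (1/24) * (q $ 3 * (q $ 4 * 1)))"
  by (simp add: RA_def fun_eq_iff)
lemma RA_24: "RA 2 4 = (\<lambda>q. 0)"
  by (simp add: RA_def fun_eq_iff)
lemma RA_30: "RA 3 0 = (\<lambda>q. (- 1/1728) * (q $ 4 * (q $ 4 * (q $ 4 * 1))) + (1/24) * (q $ 2 * (q $ 4 * 1)) + (- 1) * (q $ 1 * 1))"
  by (simp add: RA_def fun_eq_iff)
lemma RA_31: "RA 3 1 = (\<lambda>q. (1/576) * (q $ 3 * (q $ 4 * (q $ 4 * 1))) + (- 1/12) * (q $ 2 * (q $ 3 * 1)))"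
  by (simp add: RA_def fun_eq_iff)
lemma RA_32: "RA 3 2 = (\<lambda>q. (- 1/24) * (q $ 3 * (q $ 4 * 1)))"
  by (simp add: RA_def fun_eq_iff)
lemma RA_33: "RA 3 3 = (\<lambda>q. 0)"
  by (simp add: RA_def fun_eq_iff)
lemma RA_34: "RA 3 4 = (\<lambda>q. (4) * (q $ 3 * 1))"
  by (simp add: RA_def fun_eq_iff)
lemma RA_40: "RA 4 0 = (\<lambda>q. (4) * (q $ 0 * 1))"
  by (simp add: RA_def fun_eq_iff)
lemma RA_41: "RA 4 1 = (\<lambda>q. 0)"
  by (simp add: RA_def fun_eq_iff)
lemma RA_42: "RA 4 2 = (\<lambda>q. 0)"
  by (simp add: RA_def fun_eq_iff)
lemma RA_43: "RA 4 3 = (\<lambda>q. (- 4) * (q $ 3 * 1))"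
  by (simp add: RA_def fun_eq_iff)
lemma RA_44: "RA 4 4 = (\<lambda>q. 0)"
  by (simp add: RA_def fun_eq_iff)
lemmas RA_tab = RA_00 RA_01 RA_02 RA_03 RA_04 RA_10 RA_11 RA_12 RA_13 RA_14 RA_20 RA_21 RA_22 RA_23 RA_24 RA_30 RA_31 RA_32 RA_33 RA_34 RA_40 RA_41 RA_42 RA_43 RA_44

lemma span_X0A: "n_compl = {A. \<exists>c. A = (\<Sum>i\<in>UNIV. smul (c i) (X0A i))}"
proof -
  let ?L = "[H_a1, H_a23, X_a1, X_a2, X_ma2, X_ma1, X_ma3, X_ma12, X_ma23, X_ma123]"
  have len: "length ?L = 10" by simp
  have L: "(\<Sum>i<length ?L. smul (c i) (?L ! i)) = (\<Sum>i\<in>UNIV. smul (c (idx10 i)) (X0A i))" for c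
    by (simp only: len sum_lt10) (simp add: sum_10 X0A_def idx10_def)
  have R: "(\<Sum>i\<in>UNIV. smul (c i) (X0A i)) = (\<Sum>i<length ?L. smul (c (of_nat i)) (?L ! i))" for c
    by (simp only: len sum_lt10) (simp add: sum_10 X0A_def)
  show ?thesis unfolding n_compl_def cspan_def
  proof (intro set_eqI iffI)
    fix A assume "A \<in> {A. \<exists>c. A = (\<Sum>i<length ?L. smul (c i) (?L ! i))}"
    then obtain c where "A = (\<Sum>i<length ?L. smul (c i) (?L ! i))" by blast
    then show "A \<in> {A. \<exists>c. A = (\<Sum>i\<in>UNIV. smul (c i) (X0A i))}" using L[of c] by auto
  next
    fix A assume "A \<in> {A. \<exists>c. A = (\<Sum>i\<in>UNIV. smul (c i) (X0A i))}"
    then obtain c where "A = (\<Sum>i\<in>UNIV. smul (c i) (X0A i))" by blast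
    then have "A = (\<Sum>i<length ?L. smul (c (of_nat i)) (?L ! i))" using R[of c] by (rule trans)
    then show "A \<in> {A. \<exists>c. A = (\<Sum>i<length ?L. smul (c i) (?L ! i))}"
      by (intro CollectI exI[of _ "\<lambda>i. c (of_nat i)"]) (simp only:)
  qed
qed

lemma basis_X0A: "is_basis X0A n_compl"
  unfolding is_basis_def
proof (intro conjI allI impI)
  fix c :: "10 \<Rightarrow> complex" and i :: 10 assume "(\<Sum>i\<in>UNIV. smul (c i) (X0A i)) = 0"
  then have "\<forall>i. c i = 0" by (simp add: sum_10 X0A_mk smul_mk mk_add zero_mk mk_eq_iff forall_10)
  then show "c i = 0" by blast
qed (rule span_X0A)

lemma X0A_sl4: "X0A i \<in> sl4"
  using exhaust_10[of i] by (elim disjE) (simp_all add: X0A_mk sl4_def trace_mk)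

lemma compl_A: "is_complement n_compl (centralizer e_nil)"
  unfolding is_complement_def span_X0A
proof (intro conjI)
  show "csubspace {A. \<exists>c. A = (\<Sum>i\<in>UNIV. smul (c i) (X0A i))}" by (rule csub_span)
  show "{A. \<exists>c. A = (\<Sum>i\<in>UNIV. smul (c i) (X0A i))} \<subseteq> sl4" by (rule span_sl4) (rule X0A_sl4)
  show "{A. \<exists>c. A = (\<Sum>i\<in>UNIV. smul (c i) (X0A i))} \<inter> centralizer e_nil = {0}"
  proof (intro equalityI subsetI)
    fix A assume "A \<in> {A. \<exists>c. A = (\<Sum>i\<in>UNIV. smul (c i) (X0A i))} \<inter> centralizer e_nil"
    then obtain c where c: "A = (\<Sum>i\<in>UNIV. smul (c i) (X0A i))" and h: "brk e_nil A = 0"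
      by (auto simp: centralizer_def)
    have hb: "brk e_nil (\<Sum>i\<in>UNIV. smul (c i) (X0A i)) = mk ((1) * c 5) ((- 2) * c 0 + (1) * c 1) ((1) * c 3) ((- 1) * c 2) ((1) * c 9) ((- 1) * c 5 + (1) * c 8) ((1) * c 6) ((1) * c 0 + (- 2) * c 1) (0) ((- 1) * c 7) (0) ((- 1) * c 4) (0) ((- 1) * c 9) (0) ((- 1) * c 8)"
      by (simp add: sum_10 X0A_mk smul_mk mk_add e_mk brk_mk mk_eq_iff)
    have "mk ((1) * c 5) ((- 2) * c 0 + (1) * c 1) ((1) * c 3) ((- 1) * c 2) ((1) * c 9) ((- 1) * c 5 + (1) * c 8) ((1) * c 6) ((1) * c 0 + (- 2) * c 1) (0) ((- 1) * c 7) (0) ((- 1) * c 4) (0) ((- 1) * c 9) (0) ((- 1) * c 8) = 0" using h unfolding c hb .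
    then have E: "(1) * c 5 = 0 \<and> (- 2) * c 0 + (1) * c 1 = 0 \<and> (1) * c 3 = 0 \<and> (- 1) * c 2 = 0 \<and> (1) * c 9 = 0 \<and> (- 1) * c 5 + (1) * c 8 = 0 \<and> (1) * c 6 = 0 \<and> (1) * c 0 + (- 2) * c 1 = 0 \<and> (- 1) * c 7 = 0 \<and> (- 1) * c 4 = 0 \<and> (- 1) * c 9 = 0 \<and> (- 1) * c 8 = 0"
      unfolding zero_mk mk_eq_iff by blast
    have c0: "c 0 = 0" using E by algebra
    have c1: "c 1 = 0" using E by algebra
    have c2: "c 2 = 0" using E by algebra
    have c3: "c 3 = 0" using E by algebra
    have c4: "c 4 = 0" using E by algebra
    have c5: "c 5 = 0" using E by algebra
    have c6: "c 6 = 0" using E by algebra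
    have c7: "c 7 = 0" using E by algebra
    have c8: "c 8 = 0" using E by algebra
    have c9: "c 9 = 0" using E by algebra
    have "A = 0" unfolding c by (simp add: sum_10 c0 c1 c2 c3 c4 c5 c6 c7 c8 c9)
    then show "A \<in> {0}" by simp
  next
    fix A assume "A \<in> {0::mat4}"
    then have A0: "A = 0" by simp
    have "A \<in> {A. \<exists>c. A = (\<Sum>i\<in>UNIV. smul (c i) (X0A i))}"
      unfolding A0 by (intro CollectI exI[of _ "\<lambda>i. 0"]) simp
    moreover have "A \<in> centralizer e_nil" unfolding A0 by (simp add: centralizer_def sl4_zero)
    ultimately show "A \<in> {A. \<exists>c. A = (\<Sum>i\<in>UNIV. smul (c i) (X0A i))} \<inter> centralizer e_nil" by blast
  qed
  show "{A + B |A B. A \<in> {A. \<exists>c. A = (\<Sum>i\<in>UNIV. smul (c i) (X0A i))} \<and> B \<in> centralizer e_nil} = sl4"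
  proof (intro equalityI subsetI)
    fix A assume "A \<in> {A + B |A B. A \<in> {A. \<exists>c. A = (\<Sum>i\<in>UNIV. smul (c i) (X0A i))} \<and> B \<in> centralizer e_nil}"
    then obtain B C where "A = B + C" "B \<in> {A. \<exists>c. A = (\<Sum>i\<in>UNIV. smul (c i) (X0A i))}" "C \<in> centralizer e_nil" by blast
    moreover have "{A. \<exists>c. A = (\<Sum>i\<in>UNIV. smul (c i) (X0A i))} \<subseteq> sl4" by (rule span_sl4) (rule X0A_sl4)
    ultimately show "A \<in> sl4" by (auto simp: centralizer_def intro: sl4_add)
  next
    fix A assume A0: "A \<in> sl4"
    obtain a00 a01 a02 a03 a10 a11 a12 a13 a20 a21 a22 a23 a30 a31 a32 a33 where
      A: "A = mk a00 a01 a02 a03 a10 a11 a12 a13 a20 a21 a22 a23 a30 a31 a32 a33" using mk_surj[of A] by (elim exE) (erule that)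
    have tr: "a00 + a11 + a22 + a33 = 0" using A0 by (simp add: A sl4_def trace_mk)
    then have a33: "a33 = - a00 - a11 - a22" by algebra
    define dd where "dd = (\<lambda>i::10. (if i = 0 then ((1) * a00 + (1/3) * a22) else (if i = 1 then ((1) * a00 + (1) * a11 + (2/3) * a22) else (if i = 2 then ((1) * a01 + (- 1) * a13) else (if i = 3 then ((1) * a12) else (if i = 4 then ((1) * a21) else (if i = 5 then ((1) * a10) else (if i = 6 then ((1) * a32) else (if i = 7 then ((1) * a20) else (if i = 8 then ((1) * a31) else ((1) * a30)))))))))))"
    define cc where "cc = (\<lambda>i::5. (if i = 0 then ((1) * a02) else (if i = 1 then ((1) * a03) else (if i = 2 then ((1) * a13) else (if i = 3 then ((1) * a23) else ((- 1/3) * a22))))))"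
    have eq: "A = (\<Sum>i\<in>UNIV. smul (dd i) (X0A i)) + (\<Sum>i\<in>UNIV. smul (cc i) (Z0c i))"
      unfolding A a33
      by (simp add: dd_def cc_def sum_10 sum_5 X0A_mk Z0c_mk smul_mk mk_add mk_eq_iff)
    have "(\<Sum>i\<in>UNIV. smul (cc i) (Z0c i)) \<in> centralizer e_nil" by (rule basis_mem[OF basis_Z0c])
    then show "A \<in> {A + B |A B. A \<in> {A. \<exists>c. A = (\<Sum>i\<in>UNIV. smul (c i) (X0A i))} \<and> B \<in> centralizer e_nil}"
      using eq by blast
  qed
qed

lemma dual_A: "dual_part Zb0A Z0c X0A"
  unfolding dual_part_def
proof (intro conjI)
  show "\<forall>s. Zb0A s \<in> sl4" by (simp add: forall_5 Zb0A_mk sl4_def trace_mk)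
  show "\<forall>s i. killing (Zb0A s) (Z0c i) = (if s = i then 1 else 0)"
    by (simp add: forall_5 Zb0A_mk Z0c_mk killing_mk)
  show "\<forall>s l. killing (Zb0A s) (X0A l) = 0"
    by (simp add: forall_5 forall_10 Zb0A_mk X0A_mk killing_mk)
qed

lemma alpha_eq_all_A: "\<forall>k m. killing (xq Zb0A q) (brk (Z0c k + (\<Sum>l\<in>UNIV. smul (alphaA k l q) (X0A l))) (X0A m)) = 0"
  unfolding forall_5 forall_10
  by (intro conjI; simp only: UA_mk; simp only: xqA X0A_mk brk_mk killing_mk; simp)

lemma alpha_eq_A: "killing (xq Zb0A q) (brk (Z0c k + (\<Sum>l\<in>UNIV. smul (alphaA k l q) (X0A l))) (X0A m)) = 0"
  using alpha_eq_all_A by blast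

lemma R_eq_all_A: "\<forall>k l. killing (xq Zb0A q) (brk (Z0c k + (\<Sum>l\<in>UNIV. smul (alphaA k l q) (X0A l))) (Z0c l)) = RA k l q"
  unfolding forall_5
  by (intro conjI; simp only: UA_mk; simp only: xqA Z0c_mk brk_mk killing_mk RA_tab; simp?; (simp add: field_simps)?)

lemma R_eq_A: "killing (xq Zb0A q) (brk (Z0c k + (\<Sum>l\<in>UNIV. smul (alphaA k l q) (X0A l))) (Z0c l)) = RA k l q"
  using R_eq_all_A by blast

lemma R_deg_all_A: "\<forall>k l. pdeg (RA k l) 3"
  unfolding forall_5
  by (intro conjI; simp only: RA_tab; (intro pdeg.padd pdeg_cmul pdeg_mv' pdeg.pconst; simp))

lemma R_deg_A: "pdeg (RA k l) 3"
  using R_deg_all_A by blast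

lemma R_top_A: "\<exists>k l w c. c \<noteq> 0 \<and> (\<forall>t. RA k l (t *s w) = c * t ^ 3)"
  by (rule exI[of _ 0], rule exI[of _ 3], rule exI[of _ "\<chi> i. if i = 4 then 1 else 0"], rule exI[of _ "1/1728"])
     (simp add: RA_tab vector_scalar_mult_def eval_nat_numeral)

lemma ad_inv_A: "ad_invariant h_plus n_compl"
  unfolding ad_invariant_def span_X0A
proof
  fix A assume "A \<in> {A. \<exists>c. A = (\<Sum>i\<in>UNIV. smul (c i) (X0A i))}"
  then obtain c where c: "A = (\<Sum>i\<in>UNIV. smul (c i) (X0A i))" by blast
  define c' where "c' = (\<lambda>i::10. (if i = 0 then (0) else (if i = 1 then (0) else (if i = 2 then (2) else (if i = 3 then (0) else (if i = 4 then (0) else (if i = 5 then (- 2) else (if i = 6 then (- 2) else (if i = 7 then (- 2) else (if i = 8 then (- 2) else (- 4)))))))))) * c i)"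
  have "brk h_plus A = (\<Sum>i\<in>UNIV. smul (c' i) (X0A i))" unfolding c
    by (simp add: c'_def sum_10 X0A_mk smul_mk mk_add mk_eq_iff h_mk brk_mk)
  then show "brk h_plus A \<in> {A. \<exists>c. A = (\<Sum>i\<in>UNIV. smul (c i) (X0A i))}" by blast
qed

lemma refdata_A: "refdata n_compl X0A Z0c Zb0A alphaA RA 3"
  by (unfold_locales) (auto intro: basis_Z0c basis_X0A compl_A dual_A alpha_eq_A R_eq_A R_deg_A R_top_A)

lemma trans_A: "transverse_degree TYPE(5) TYPE(10) n_compl 3"
  by (rule refdata.transverse[OF refdata_A])

definition X0B :: "10 \<Rightarrow> mat4" where
  "X0B l = (if l = 0 then H_a1 else (if l = 1 then H_a2 else (if l = 2 then X_a1 else (if l = 3 then X_a2 else (if l = 4 then X_ma2 else (if l = 5 then X_ma1 else (if l = 6 then X_ma3 else (if l = 7 then X_ma12 else (if l = 8 then X_ma23 else X_ma123)))))))))"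
lemma X0B_0: "X0B 0 = mk ((1)) (0) (0) (0) (0) ((- 1)) (0) (0) (0) (0) (0) (0) (0) (0) (0) (0)"
  by (simp add: X0B_def Hr_def Em_mk mk_diff)
lemma X0B_1: "X0B 1 = mk (0) (0) (0) (0) (0) ((1)) (0) (0) (0) (0) ((- 1)) (0) (0) (0) (0) (0)"
  by (simp add: X0B_def Hr_def Em_mk mk_diff)
lemma X0B_2: "X0B 2 = mk (0) ((1)) (0) (0) (0) (0) (0) (0) (0) (0) (0) (0) (0) (0) (0) (0)"
  by (simp add: X0B_def Hr_def Em_mk mk_diff)
lemma X0B_3: "X0B 3 = mk (0) (0) (0) (0) (0) (0) ((1)) (0) (0) (0) (0) (0) (0) (0) (0) (0)"
  by (simp add: X0B_def Hr_def Em_mk mk_diff)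
lemma X0B_4: "X0B 4 = mk (0) (0) (0) (0) (0) (0) (0) (0) (0) ((1)) (0) (0) (0) (0) (0) (0)"
  by (simp add: X0B_def Hr_def Em_mk mk_diff)
lemma X0B_5: "X0B 5 = mk (0) (0) (0) (0) ((1)) (0) (0) (0) (0) (0) (0) (0) (0) (0) (0) (0)"
  by (simp add: X0B_def Hr_def Em_mk mk_diff)
lemma X0B_6: "X0B 6 = mk (0) (0) (0) (0) (0) (0) (0) (0) (0) (0) (0) (0) (0) (0) ((1)) (0)"
  by (simp add: X0B_def Hr_def Em_mk mk_diff)
lemma X0B_7: "X0B 7 = mk (0) (0) (0) (0) (0) (0) (0) (0) ((1)) (0) (0) (0) (0) (0) (0) (0)"
  by (simp add: X0B_def Hr_def Em_mk mk_diff)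
lemma X0B_8: "X0B 8 = mk (0) (0) (0) (0) (0) (0) (0) (0) (0) (0) (0) (0) (0) ((1)) (0) (0)"
  by (simp add: X0B_def Hr_def Em_mk mk_diff)
lemma X0B_9: "X0B 9 = mk (0) (0) (0) (0) (0) (0) (0) (0) (0) (0) (0) (0) ((1)) (0) (0) (0)"
  by (simp add: X0B_def Hr_def Em_mk mk_diff)
lemmas X0B_mk = X0B_0 X0B_1 X0B_2 X0B_3 X0B_4 X0B_5 X0B_6 X0B_7 X0B_8 X0B_9
definition Zb0B :: "5 \<Rightarrow> mat4" where
  "Zb0B s = (if s = 0 then mk (0) (0) (0) (0) (0) (0) (0) (0) ((1/8)) (0) (0) (0) (0) (0) (0) (0) else (if s = 1 then mk (0) (0) (0) (0) (0) (0) (0) (0) (0) (0) (0) (0) ((1/8)) (0) (0) (0) else (if s = 2 then mk (0) (0) (0) (0) (0) (0) (0) (0) (0) (0) (0) (0) (0) ((1/8)) (0) (0) else (if s = 3 then mk (0) (0) (0) (0) (0) (0) (0) (0) (0) (0) (0) (0) (0) (0) ((1/8)) (0) else mk ((- 1/32)) (0) (0) (0) (0) ((- 1/32)) (0) (0) (0) (0) ((- 1/32)) (0) (0) (0) (0) ((3/32))))))"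
lemma Zb0B_0: "Zb0B 0 = mk (0) (0) (0) (0) (0) (0) (0) (0) ((1/8)) (0) (0) (0) (0) (0) (0) (0)"
  by (simp add: Zb0B_def)
lemma Zb0B_1: "Zb0B 1 = mk (0) (0) (0) (0) (0) (0) (0) (0) (0) (0) (0) (0) ((1/8)) (0) (0) (0)"
  by (simp add: Zb0B_def)
lemma Zb0B_2: "Zb0B 2 = mk (0) (0) (0) (0) (0) (0) (0) (0) (0) (0) (0) (0) (0) ((1/8)) (0) (0)"
  by (simp add: Zb0B_def)
lemma Zb0B_3: "Zb0B 3 = mk (0) (0) (0) (0) (0) (0) (0) (0) (0) (0) (0) (0) (0) (0) ((1/8)) (0)"
  by (simp add: Zb0B_def)
lemma Zb0B_4: "Zb0B 4 = mk ((- 1/32)) (0) (0) (0) (0) ((- 1/32)) (0) (0) (0) (0) ((- 1/32)) (0) (0) (0) (0) ((3/32))"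
  by (simp add: Zb0B_def)
lemmas Zb0B_mk = Zb0B_0 Zb0B_1 Zb0B_2 Zb0B_3 Zb0B_4
lemma xqB: "xq Zb0B q = mk ((- 1/32) * q $ 4) ((1)) (0) (0) (0) ((- 1/32) * q $ 4) (0) ((1)) ((1/8) * q $ 0) (0) ((- 1/32) * q $ 4) (0) ((1/8) * q $ 1) ((1/8) * q $ 2) ((1/8) * q $ 3) ((3/32) * q $ 4)"
  by (simp add: xq_def sum_5 Zb0B_mk e_mk smul_mk mk_add mk_eq_iff)
definition alphaB :: "5 \<Rightarrow> 10 \<Rightarrow> complex^5 \<Rightarrow> complex" where
  "alphaB k l q = (if k = 0 then (if l = 0 then (0) else (if l = 1 then (0) else (if l = 2 then (0) else (if l = 3 then (0) else (if l = 4 then (0) else (if l = 5 then ((1/4) * q $ 0) else (if l = 6 then (0) else (if l = 7 then (0) else (if l = 8 then ((3/8) * q $ 0) else (0)))))))))) else (if k = 1 then (if l = 0 then ((- 1/8) * q $ 2) else (if l = 1 then ((- 1/8) * q $ 2) else (if l = 2 then ((- 1/8) * q $ 4) else (if l = 3 then ((1/8) * q $ 3) else (if l = 4 then ((1/8) * q $ 0) else (if l = 5 then ((1/8) * q $ 1) else (if l = 6 then (0) else (if l = 7 then ((- 1/64) * q $ 0 * q $ 4) else (if l = 8 then ((1/8) * q $ 1) else ((1/64) * q $ 0 * q $ 3)))))))))) else (if k = 2 then (if l = 0 then ((- 1/8) * q $ 4) else (if l = 1 then ((- 1/4) * q $ 4) else (if l = 2 then (0) else (if l = 3 then (0) else (if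 l = 4 then (0) else (if l = 5 then (0) else (if l = 6 then ((1/8) * q $ 3) else (if l = 7 then ((1/8) * q $ 0) else (if l = 8 then ((1/8) * q $ 2) else ((1/8) * q $ 1)))))))))) else (if k = 3 then (if l = 0 then (0) else (if l = 1 then (0) else (if l = 2 then (0) else (if l = 3 then (0) else (if l = 4 then ((- 1/8) * q $ 4) else (if l = 5 then ((- 1/8) * q $ 3) else (if l = 6 then (0) else (if l = 7 then ((- 1/8) * q $ 2) else (if l = 8 then ((- 1/4) * q $ 3) else (0)))))))))) else (if l = 0 then (0) else (if l = 1 then (0) else (if l = 2 then (0) else (if l = 3 then (0) else (if l = 4 then (0) else (if l = 5 then (0) else (if l = 6 then (0) else (if l = 7 then (0) else (if l = 8 then (0) else (0))))))))))))))"
lemma UB_0: "Z0c 0 + (\<Sum>l\<in>UNIV. smul (alphaB 0 l q) (X0B l)) = mk (0) (0) ((1)) (0) ((1/4) * q $ 0) (0) (0) (0) (0) (0) (0) (0) (0) ((3/8) * q $ 0) (0) (0)"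
  by (simp add: sum_10 alphaB_def X0B_mk Z0c_mk smul_mk mk_add mk_eq_iff)
lemma UB_1: "Z0c 1 + (\<Sum>l\<in>UNIV. smul (alphaB 1 l q) (X0B l)) = mk ((- 1/8) * q $ 2) ((- 1/8) * q $ 4) (0) ((1)) ((1/8) * q $ 1) (0) ((1/8) * q $ 3) (0) ((- 1/64) * q $ 0 * q $ 4) ((1/8) * q $ 0) ((1/8) * q $ 2) (0) ((1/64) * q $ 0 * q $ 3) ((1/8) * q $ 1) (0) (0)"
  by (simp add: sum_10 alphaB_def X0B_mk Z0c_mk smul_mk mk_add mk_eq_iff)
lemma UB_2: "Z0c 2 + (\<Sum>l\<in>UNIV. smul (alphaB 2 l q) (X0B l)) = mk ((- 1/8) * q $ 4) ((1)) (0) (0) (0) ((- 1/8) * q $ 4) (0) ((1)) ((1/8) * q $ 0) (0) ((1/4) * q $ 4) (0) ((1/8) * q $ 1) ((1/8) * q $ 2) ((1/8) * q $ 3) (0)"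
  by (simp add: sum_10 alphaB_def X0B_mk Z0c_mk smul_mk mk_add mk_eq_iff)
lemma UB_3: "Z0c 3 + (\<Sum>l\<in>UNIV. smul (alphaB 3 l q) (X0B l)) = mk (0) (0) (0) (0) ((- 1/8) * q $ 3) (0) (0) (0) ((- 1/8) * q $ 2) ((- 1/8) * q $ 4) (0) ((1)) (0) ((- 1/4) * q $ 3) (0) (0)"
  by (simp add: sum_10 alphaB_def X0B_mk Z0c_mk smul_mk mk_add mk_eq_iff)
lemma UB_4: "Z0c 4 + (\<Sum>l\<in>UNIV. smul (alphaB 4 l q) (X0B l)) = mk ((1)) (0) (0) (0) (0) ((1)) (0) (0) (0) (0) ((- 3)) (0) (0) (0) (0) ((1))"
  by (simp add: sum_10 alphaB_def X0B_mk Z0c_mk smul_mk mk_add mk_eq_iff)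
lemmas UB_mk = UB_0 UB_1 UB_2 UB_3 UB_4
definition RB :: "5 \<Rightarrow> 5 \<Rightarrow> complex^5 \<Rightarrow> complex" where
  "RB k l q = (if k = 0 then (if l = 0 then (0) else (if l = 1 then ((1/4) * (q $ 0 * (q $ 2 * 1))) else (if l = 2 then ((3/8) * (q $ 0 * (q $ 4 * 1))) else (if l = 3 then ((1) * (q $ 1 * 1)) else ((- 4) * (q $ 0 * 1)))))) else (if k = 1 then (if l = 0 then ((- 1/4) * (q $ 0 * (q $ 2 * 1))) else (if l = 1 then (0) else (if l = 2 then (0) else (if l = 3 then ((1/4) * (q $ 2 * (q $ 3 * 1))) else (0))))) else (if k = 2 then (if l = 0 then ((- 3/8) * (q $ 0 * (q $ 4 * 1))) else (if l = 1 then (0) else (if l = 2 then (0) else (if l = 3 then ((3/8) * (q $ 3 * (q $ 4 * 1))) else (0))))) else (if k = 3 then (if l = 0 then ((- 1) * (q $ 1 * 1)) else (if l = 1 then ((- 1/4) * (q $ 2 * (q $ 3 * 1))) else (if l = 2 then ((- 3/8) * (q $ 3 * (q $ 4 * 1))) else (if l = 3 then (0) else ((4) * (q $ 3 * 1)))))) else (if l = 0 then ((4) * (q $ 0 * 1)) else (if l = 1 then (0) else (if l = 2 then (0) else (if l = 3 then ((- 4) * (q $ 3 * 1)) else (0)))))))))"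
lemma RB_00: "RB 0 0 = (\<lambda>q. 0)"
  by (simp add: RB_def fun_eq_iff)
lemma RB_01: "RB 0 1 = (\<lambda>q. (1/4) * (q $ 0 * (q $ 2 * 1)))"
  by (simp add: RB_def fun_eq_iff)
lemma RB_02: "RB 0 2 = (\<lambda>q. (3/8) * (q $ 0 * (q $ 4 * 1)))"
  by (simp add: RB_def fun_eq_iff)
lemma RB_03: "RB 0 3 = (\<lambda>q. (1) * (q $ 1 * 1))"
  by (simp add: RB_def fun_eq_iff)
lemma RB_04: "RB 0 4 = (\<lambda>q. (- 4) * (q $ 0 * 1))"
  by (simp add: RB_def fun_eq_iff)
lemma RB_10: "RB 1 0 = (\<lambda>q. (- 1/4) * (q $ 0 * (q $ 2 * 1)))"
  by (simp add: RB_def fun_eq_iff)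
lemma RB_11: "RB 1 1 = (\<lambda>q. 0)"
  by (simp add: RB_def fun_eq_iff)
lemma RB_12: "RB 1 2 = (\<lambda>q. 0)"
  by (simp add: RB_def fun_eq_iff)
lemma RB_13: "RB 1 3 = (\<lambda>q. (1/4) * (q $ 2 * (q $ 3 * 1)))"
  by (simp add: RB_def fun_eq_iff)
lemma RB_14: "RB 1 4 = (\<lambda>q. 0)"
  by (simp add: RB_def fun_eq_iff)
lemma RB_20: "RB 2 0 = (\<lambda>q. (- 3/8) * (q $ 0 * (q $ 4 * 1)))"
  by (simp add: RB_def fun_eq_iff)
lemma RB_21: "RB 2 1 = (\<lambda>q. 0)"
  by (simp add: RB_def fun_eq_iff)
lemma RB_22: "RB 2 2 = (\<lambda>q. 0)"
  by (simp add: RB_def fun_eq_iff)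
lemma RB_23: "RB 2 3 = (\<lambda>q. (3/8) * (q $ 3 * (q $ 4 * 1)))"
  by (simp add: RB_def fun_eq_iff)
lemma RB_24: "RB 2 4 = (\<lambda>q. 0)"
  by (simp add: RB_def fun_eq_iff)
lemma RB_30: "RB 3 0 = (\<lambda>q. (- 1) * (q $ 1 * 1))"
  by (simp add: RB_def fun_eq_iff)
lemma RB_31: "RB 3 1 = (\<lambda>q. (- 1/4) * (q $ 2 * (q $ 3 * 1)))"
  by (simp add: RB_def fun_eq_iff)
lemma RB_32: "RB 3 2 = (\<lambda>q. (- 3/8) * (q $ 3 * (q $ 4 * 1)))"
  by (simp add: RB_def fun_eq_iff)
lemma RB_33: "RB 3 3 = (\<lambda>q. 0)"
  by (simp add: RB_def fun_eq_iff)
lemma RB_34: "RB 3 4 = (\<lambda>q. (4) * (q $ 3 * 1))"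
  by (simp add: RB_def fun_eq_iff)
lemma RB_40: "RB 4 0 = (\<lambda>q. (4) * (q $ 0 * 1))"
  by (simp add: RB_def fun_eq_iff)
lemma RB_41: "RB 4 1 = (\<lambda>q. 0)"
  by (simp add: RB_def fun_eq_iff)
lemma RB_42: "RB 4 2 = (\<lambda>q. 0)"
  by (simp add: RB_def fun_eq_iff)
lemma RB_43: "RB 4 3 = (\<lambda>q. (- 4) * (q $ 3 * 1))"
  by (simp add: RB_def fun_eq_iff)
lemma RB_44: "RB 4 4 = (\<lambda>q. 0)"
  by (simp add: RB_def fun_eq_iff)
lemmas RB_tab = RB_00 RB_01 RB_02 RB_03 RB_04 RB_10 RB_11 RB_12 RB_13 RB_14 RB_20 RB_21 RB_22 RB_23 RB_24 RB_30 RB_31 RB_32 RB_33 RB_34 RB_40 RB_41 RB_42 RB_43 RB_44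

lemma span_X0B: "n_compl' = {A. \<exists>c. A = (\<Sum>i\<in>UNIV. smul (c i) (X0B i))}"
proof -
  let ?L = "[H_a1, H_a2, X_a1, X_a2, X_ma2, X_ma1, X_ma3, X_ma12, X_ma23, X_ma123]"
  have len: "length ?L = 10" by simp
  have L: "(\<Sum>i<length ?L. smul (c i) (?L ! i)) = (\<Sum>i\<in>UNIV. smul (c (idx10 i)) (X0B i))" for c
    by (simp only: len sum_lt10) (simp add: sum_10 X0B_def idx10_def)
  have R: "(\<Sum>i\<in>UNIV. smul (c i) (X0B i)) = (\<Sum>i<length ?L. smul (c (of_nat i)) (?L ! i))" for c
    by (simp only: len sum_lt10) (simp add: sum_10 X0B_def)
  show ?thesis unfolding n_compl'_def cspan_def
  proof (intro set_eqI iffI)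
    fix A assume "A \<in> {A. \<exists>c. A = (\<Sum>i<length ?L. smul (c i) (?L ! i))}"
    then obtain c where "A = (\<Sum>i<length ?L. smul (c i) (?L ! i))" by blast
    then show "A \<in> {A. \<exists>c. A = (\<Sum>i\<in>UNIV. smul (c i) (X0B i))}" using L[of c] by auto
  next
    fix A assume "A \<in> {A. \<exists>c. A = (\<Sum>i\<in>UNIV. smul (c i) (X0B i))}"
    then obtain c where "A = (\<Sum>i\<in>UNIV. smul (c i) (X0B i))" by blast
    then have "A = (\<Sum>i<length ?L. smul (c (of_nat i)) (?L ! i))" using R[of c] by (rule trans)
    then show "A \<in> {A. \<exists>c. A = (\<Sum>i<length ?L. smul (c i) (?L ! i))}"
      by (intro CollectI exI[of _ "\<lambda>i. c (of_nat i)"]) (simp only:)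
  qed
qed

lemma basis_X0B: "is_basis X0B n_compl'"
  unfolding is_basis_def
proof (intro conjI allI impI)
  fix c :: "10 \<Rightarrow> complex" and i :: 10 assume "(\<Sum>i\<in>UNIV. smul (c i) (X0B i)) = 0"
  then have "\<forall>i. c i = 0" by (simp add: sum_10 X0B_mk smul_mk mk_add zero_mk mk_eq_iff forall_10)
  then show "c i = 0" by blast
qed (rule span_X0B)

lemma X0B_sl4: "X0B i \<in> sl4"
  using exhaust_10[of i] by (elim disjE) (simp_all add: X0B_mk sl4_def trace_mk)

lemma compl_B: "is_complement n_compl' (centralizer e_nil)"
  unfolding is_complement_def span_X0B
proof (intro conjI)
  show "csubspace {A. \<exists>c. A = (\<Sum>i\<in>UNIV. smul (c i) (X0B i))}" by (rule csub_span)
  show "{A. \<exists>c. A = (\<Sum>i\<in>UNIV. smul (c i) (X0B i))} \<subseteq> sl4" by (rule span_sl4) (rule X0B_sl4)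
  show "{A. \<exists>c. A = (\<Sum>i\<in>UNIV. smul (c i) (X0B i))} \<inter> centralizer e_nil = {0}"
  proof (intro equalityI subsetI)
    fix A assume "A \<in> {A. \<exists>c. A = (\<Sum>i\<in>UNIV. smul (c i) (X0B i))} \<inter> centralizer e_nil"
    then obtain c where c: "A = (\<Sum>i\<in>UNIV. smul (c i) (X0B i))" and h: "brk e_nil A = 0"
      by (auto simp: centralizer_def)
    have hb: "brk e_nil (\<Sum>i\<in>UNIV. smul (c i) (X0B i)) = mk ((1) * c 5) ((- 2) * c 0 + (1) * c 1) ((1) * c 3) ((- 1) * c 2) ((1) * c 9) ((- 1) * c 5 + (1) * c 8) ((1) * c 6) ((1) * c 0 + (- 1) * c 1) (0) ((- 1) * c 7) (0) ((- 1) * c 4) (0) ((- 1) * c 9) (0) ((- 1) * c 8)"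
      by (simp add: sum_10 X0B_mk smul_mk mk_add e_mk brk_mk mk_eq_iff)
    have "mk ((1) * c 5) ((- 2) * c 0 + (1) * c 1) ((1) * c 3) ((- 1) * c 2) ((1) * c 9) ((- 1) * c 5 + (1) * c 8) ((1) * c 6) ((1) * c 0 + (- 1) * c 1) (0) ((- 1) * c 7) (0) ((- 1) * c 4) (0) ((- 1) * c 9) (0) ((- 1) * c 8) = 0" using h unfolding c hb .
    then have E: "(1) * c 5 = 0 \<and> (- 2) * c 0 + (1) * c 1 = 0 \<and> (1) * c 3 = 0 \<and> (- 1) * c 2 = 0 \<and> (1) * c 9 = 0 \<and> (- 1) * c 5 + (1) * c 8 = 0 \<and> (1) * c 6 = 0 \<and> (1) * c 0 + (- 1) * c 1 = 0 \<and> (- 1) * c 7 = 0 \<and> (- 1) * c 4 = 0 \<and> (- 1) * c 9 = 0 \<and> (- 1) * c 8 = 0"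
      unfolding zero_mk mk_eq_iff by blast
    have c0: "c 0 = 0" using E by algebra
    have c1: "c 1 = 0" using E by algebra
    have c2: "c 2 = 0" using E by algebra
    have c3: "c 3 = 0" using E by algebra
    have c4: "c 4 = 0" using E by algebra
    have c5: "c 5 = 0" using E by algebra
    have c6: "c 6 = 0" using E by algebra
    have c7: "c 7 = 0" using E by algebra
    have c8: "c 8 = 0" using E by algebra
    have c9: "c 9 = 0" using E by algebra
    have "A = 0" unfolding c by (simp add: sum_10 c0 c1 c2 c3 c4 c5 c6 c7 c8 c9)
    then show "A \<in> {0}" by simp
  next
    fix A assume "A \<in> {0::mat4}"
    then have A0: "A = 0" by simp
    have "A \<in> {A. \<exists>c. A = (\<Sum>i\<in>UNIV. smul (c i) (X0B i))}"
      unfolding A0 by (intro CollectI exI[of _ "\<lambda>i. 0"]) simp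
    moreover have "A \<in> centralizer e_nil" unfolding A0 by (simp add: centralizer_def sl4_zero)
    ultimately show "A \<in> {A. \<exists>c. A = (\<Sum>i\<in>UNIV. smul (c i) (X0B i))} \<inter> centralizer e_nil" by blast
  qed
  show "{A + B |A B. A \<in> {A. \<exists>c. A = (\<Sum>i\<in>UNIV. smul (c i) (X0B i))} \<and> B \<in> centralizer e_nil} = sl4"
  proof (intro equalityI subsetI)
    fix A assume "A \<in> {A + B |A B. A \<in> {A. \<exists>c. A = (\<Sum>i\<in>UNIV. smul (c i) (X0B i))} \<and> B \<in> centralizer e_nil}"
    then obtain B C where "A = B + C" "B \<in> {A. \<exists>c. A = (\<Sum>i\<in>UNIV. smul (c i) (X0B i))}" "C \<in> centralizer e_nil" by blast
    moreover have "{A. \<exists>c. A = (\<Sum>i\<in>UNIV. smul (c i) (X0B i))} \<subseteq> sl4" by (rule span_sl4) (rule X0B_sl4)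
    ultimately show "A \<in> sl4" by (auto simp: centralizer_def intro: sl4_add)
  next
    fix A assume A0: "A \<in> sl4"
    obtain a00 a01 a02 a03 a10 a11 a12 a13 a20 a21 a22 a23 a30 a31 a32 a33 where
      A: "A = mk a00 a01 a02 a03 a10 a11 a12 a13 a20 a21 a22 a23 a30 a31 a32 a33" using mk_surj[of A] by (elim exE) (erule that)
    have tr: "a00 + a11 + a22 + a33 = 0" using A0 by (simp add: A sl4_def trace_mk)
    then have a33: "a33 = - a00 - a11 - a22" by algebra
    define dd where "dd = (\<lambda>i::10. (if i = 0 then ((2) * a00 + (1) * a11 + (1) * a22) else (if i = 1 then ((3) * a00 + (3) * a11 + (2) * a22) else (if i = 2 then ((1) * a01 + (- 1) * a13) else (if i = 3 then ((1) * a12) else (if i = 4 then ((1) * a21) else (if i = 5 then ((1) * a10) else (if i = 6 then ((1) * a32) else (if i = 7 then ((1) * a20) else (if i = 8 then ((1) * a31) else ((1) * a30)))))))))))"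
    define cc where "cc = (\<lambda>i::5. (if i = 0 then ((1) * a02) else (if i = 1 then ((1) * a03) else (if i = 2 then ((1) * a13) else (if i = 3 then ((1) * a23) else ((- 1) * a00 + (- 1) * a11 + (- 1) * a22))))))"
    have eq: "A = (\<Sum>i\<in>UNIV. smul (dd i) (X0B i)) + (\<Sum>i\<in>UNIV. smul (cc i) (Z0c i))"
      unfolding A a33
      by (simp add: dd_def cc_def sum_10 sum_5 X0B_mk Z0c_mk smul_mk mk_add mk_eq_iff)
    have "(\<Sum>i\<in>UNIV. smul (cc i) (Z0c i)) \<in> centralizer e_nil" by (rule basis_mem[OF basis_Z0c])
    then show "A \<in> {A + B |A B. A \<in> {A. \<exists>c. A = (\<Sum>i\<in>UNIV. smul (c i) (X0B i))} \<and> B \<in> centralizer e_nil}"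
      using eq by blast
  qed
qed

lemma dual_B: "dual_part Zb0B Z0c X0B"
  unfolding dual_part_def
proof (intro conjI)
  show "\<forall>s. Zb0B s \<in> sl4" by (simp add: forall_5 Zb0B_mk sl4_def trace_mk)
  show "\<forall>s i. killing (Zb0B s) (Z0c i) = (if s = i then 1 else 0)"
    by (simp add: forall_5 Zb0B_mk Z0c_mk killing_mk)
  show "\<forall>s l. killing (Zb0B s) (X0B l) = 0"
    by (simp add: forall_5 forall_10 Zb0B_mk X0B_mk killing_mk)
qed

lemma alpha_eq_all_B: "\<forall>k m. killing (xq Zb0B q) (brk (Z0c k + (\<Sum>l\<in>UNIV. smul (alphaB k l q) (X0B l))) (X0B m)) = 0"
  unfolding forall_5 forall_10
  by (intro conjI; simp only: UB_mk; simp only: xqB X0B_mk brk_mk killing_mk; simp)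

lemma alpha_eq_B: "killing (xq Zb0B q) (brk (Z0c k + (\<Sum>l\<in>UNIV. smul (alphaB k l q) (X0B l))) (X0B m)) = 0"
  using alpha_eq_all_B by blast

lemma R_eq_all_B: "\<forall>k l. killing (xq Zb0B q) (brk (Z0c k + (\<Sum>l\<in>UNIV. smul (alphaB k l q) (X0B l))) (Z0c l)) = RB k l q"
  unfolding forall_5
  by (intro conjI; simp only: UB_mk; simp only: xqB Z0c_mk brk_mk killing_mk RB_tab; simp?; (simp add: field_simps)?)

lemma R_eq_B: "killing (xq Zb0B q) (brk (Z0c k + (\<Sum>l\<in>UNIV. smul (alphaB k l q) (X0B l))) (Z0c l)) = RB k l q"
  using R_eq_all_B by blast

lemma R_deg_all_B: "\<forall>k l. pdeg (RB k l) 2"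
  unfolding forall_5
  by (intro conjI; simp only: RB_tab; (intro pdeg.padd pdeg_cmul pdeg_mv' pdeg.pconst; simp))

lemma R_deg_B: "pdeg (RB k l) 2"
  using R_deg_all_B by blast

lemma R_top_B: "\<exists>k l w c. c \<noteq> 0 \<and> (\<forall>t. RB k l (t *s w) = c * t ^ 2)"
  by (rule exI[of _ 0], rule exI[of _ 1], rule exI[of _ "\<chi> i. if i = 0 then 1 else if i = 2 then 1 else 0"], rule exI[of _ "1/4"])
     (simp add: RB_tab vector_scalar_mult_def eval_nat_numeral)

lemma ad_inv_B: "ad_invariant h_plus n_compl'"
  unfolding ad_invariant_def span_X0B
proof
  fix A assume "A \<in> {A. \<exists>c. A = (\<Sum>i\<in>UNIV. smul (c i) (X0B i))}"
  then obtain c where c: "A = (\<Sum>i\<in>UNIV. smul (c i) (X0B i))" by blast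
  define c' where "c' = (\<lambda>i::10. (if i = 0 then (0) else (if i = 1 then (0) else (if i = 2 then (2) else (if i = 3 then (0) else (if i = 4 then (0) else (if i = 5 then (- 2) else (if i = 6 then (- 2) else (if i = 7 then (- 2) else (if i = 8 then (- 2) else (- 4)))))))))) * c i)"
  have "brk h_plus A = (\<Sum>i\<in>UNIV. smul (c' i) (X0B i))" unfolding c
    by (simp add: c'_def sum_10 X0B_mk smul_mk mk_add mk_eq_iff h_mk brk_mk)
  then show "brk h_plus A \<in> {A. \<exists>c. A = (\<Sum>i\<in>UNIV. smul (c i) (X0B i))}" by blast
qed

lemma refdata_B: "refdata n_compl' X0B Z0c Zb0B alphaB RB 2"
  by (unfold_locales) (auto intro: basis_Z0c basis_X0B compl_B dual_B alpha_eq_B R_eq_B R_deg_B R_top_B)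

lemma trans_B: "transverse_degree TYPE(5) TYPE(10) n_compl' 2"
  by (rule refdata.transverse[OF refdata_B])


theorem mainTheorem6:
  shows "is_complement n_compl (centralizer e_nil) \<and> ad_invariant h_plus n_compl \<and>
         is_complement n_compl' (centralizer e_nil) \<and> ad_invariant h_plus n_compl' \<and>
         transverse_degree TYPE(5) TYPE(10) n_compl 3 \<and>
         transverse_degree TYPE(5) TYPE(10) n_compl' 2"
  using compl_A ad_inv_A compl_B ad_inv_B trans_A trans_B by blast


end
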